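(* Let $\mu$ be a finite or $\sigma$-finite measure, let $C$ be a norm-closed convex bounded subset of $L_1(\mu)$, and let $T:C\to C$ be an affine Lipschitzian mapping. If $S(T)<\frac{2}{t(C)}$, then $T$ has a fixed point.
   Context: $T$ affine means $T(\lambda x+(1-\lambda)y)=\lambda Tx+(1-\lambda)Ty$ for $x,y\in C$, $\lambda\in[0,1]$. For Lipschitzian $T$, $|T|=\sup\{\|Tx-Ty\|/\|x-y\|: x,y\in C, x\ne y\}$ and $S(T)=\liminf_n \frac{|T|+|T^2|+\cdots+|T^n|}{n}$. $t(C)=\inf\{\lambda\ge0:\ \inf_{c\in C}\limsup_n\|c-x_n\|\le\lambda\limsup_n\|x-x_n\|$ for all sequences $(x_n)\subset C$ and $x\in L_1(\mu)$ with $x_n\to x$ $\mu$-a.e.$\}$ (equivalently, with convergence in measure, or local convergence in measure in the $\sigma$-finite case). *)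

theory Defs
  imports "HOL-Analysis.Analysis"
begin

text \<open>Elements of L_1(mu) are represented by integrable real functions; the L_1 norm
is a seminorm on functions, and a subset of L_1(mu) is a set of integrable functions
closed under a.e. equality.\<close>

definition L1norm :: "'a measure \<Rightarrow> ('a \<Rightarrow> real) \<Rightarrow> real" where
  "L1norm M f = (\<integral>x. \<bar>f x\<bar> \<partial>M)"

definition L1_subset :: "'a measure \<Rightarrow> ('a \<Rightarrow> real) set \<Rightarrow> bool" where
  "L1_subset M C \<longleftrightarrow> (\<forall>f\<in>C. integrable M f) \<and>
     (\<forall>f\<in>C. \<forall>g. integrable M g \<longrightarrow> (AE x in M. f x = g x) \<longrightarrow> g \<in> C)"

definition L1_closed :: "'a measure \<Rightarrow> ('a \<Rightarrow> real) set \<Rightarrow> bool" where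
  "L1_closed M C \<longleftrightarrow> (\<forall>xs x. (\<forall>n. xs n \<in> C) \<longrightarrow> integrable M x \<longrightarrow>
     (\<lambda>n. L1norm M (\<lambda>w. xs n w - x w)) \<longlonglongrightarrow> 0 \<longrightarrow> x \<in> C)"

definition L1_convex :: "('a \<Rightarrow> real) set \<Rightarrow> bool" where
  "L1_convex C \<longleftrightarrow> (\<forall>x\<in>C. \<forall>y\<in>C. \<forall>l::real. 0 \<le> l \<and> l \<le> 1 \<longrightarrow>
     (\<lambda>w. l * x w + (1 - l) * y w) \<in> C)"

definition L1_bounded :: "'a measure \<Rightarrow> ('a \<Rightarrow> real) set \<Rightarrow> bool" where
  "L1_bounded M C \<longleftrightarrow> (\<exists>B. \<forall>x\<in>C. L1norm M x \<le> B)"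

definition L1_affine :: "'a measure \<Rightarrow> ('a \<Rightarrow> real) set \<Rightarrow> (('a \<Rightarrow> real) \<Rightarrow> ('a \<Rightarrow> real)) \<Rightarrow> bool" where
  "L1_affine M C T \<longleftrightarrow> (\<forall>x\<in>C. \<forall>y\<in>C. \<forall>l::real. 0 \<le> l \<and> l \<le> 1 \<longrightarrow>
     (AE w in M. T (\<lambda>v. l * x v + (1 - l) * y v) w = l * T x w + (1 - l) * T y w))"

definition L1_lipschitzian :: "'a measure \<Rightarrow> ('a \<Rightarrow> real) set \<Rightarrow> (('a \<Rightarrow> real) \<Rightarrow> ('a \<Rightarrow> real)) \<Rightarrow> bool" where
  "L1_lipschitzian M C T \<longleftrightarrow> (\<exists>L. \<forall>x\<in>C. \<forall>y\<in>C.
     L1norm M (\<lambda>w. T x w - T y w) \<le> L * L1norm M (\<lambda>w. x w - y w))"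

text \<open>Lipschitz constant |T| (pairs with x \<noteq> y in L_1, i.e. nonzero distance).\<close>
definition lip_const :: "'a measure \<Rightarrow> ('a \<Rightarrow> real) set \<Rightarrow> (('a \<Rightarrow> real) \<Rightarrow> ('a \<Rightarrow> real)) \<Rightarrow> real" where
  "lip_const M C T = Sup {L1norm M (\<lambda>w. T x w - T y w) / L1norm M (\<lambda>w. x w - y w) | x y.
      x \<in> C \<and> y \<in> C \<and> L1norm M (\<lambda>w. x w - y w) \<noteq> 0}"

definition S_const :: "'a measure \<Rightarrow> ('a \<Rightarrow> real) set \<Rightarrow> (('a \<Rightarrow> real) \<Rightarrow> ('a \<Rightarrow> real)) \<Rightarrow> ereal" where
  "S_const M C T = liminf (\<lambda>n. ereal ((\<Sum>k=1..n. lip_const M C (T ^^ k)) / real n))"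

definition t_const :: "'a measure \<Rightarrow> ('a \<Rightarrow> real) set \<Rightarrow> ereal" where
  "t_const M C = Inf {ereal l | l. l \<ge> 0 \<and>
     (\<forall>xs x. (\<forall>n. xs n \<in> C) \<longrightarrow> integrable M x \<longrightarrow>
        (AE w in M. (\<lambda>n. xs n w) \<longlonglongrightarrow> x w) \<longrightarrow>
        (INF c\<in>C. limsup (\<lambda>n. ereal (L1norm M (\<lambda>w. c w - xs n w))))
          \<le> ereal l * limsup (\<lambda>n. ereal (L1norm M (\<lambda>w. x w - xs n w)))) }"

end

theory Submission
  imports Defs
begin

lemma L1_nonneg: "0 \<le> L1norm M f"
  unfolding L1norm_def by (rule integral_nonneg_AE) auto

lemma L1_add:
  assumes "integrable M f" "integrable M g"
  shows "L1norm M (\<lambda>w. f w + g w) \<le> L1norm M f + L1norm M g"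
proof -
  have "L1norm M (\<lambda>w. f w + g w) \<le> (\<integral>w. \<bar>f w\<bar> + \<bar>g w\<bar> \<partial>M)"
    unfolding L1norm_def using assms by (intro integral_mono) auto
  also have "\<dots> = L1norm M f + L1norm M g"
    unfolding L1norm_def using assms by (intro Bochner_Integration.integral_add integrable_abs assms)
  finally show ?thesis .
qed

lemma L1_scale: "L1norm M (\<lambda>w. c * f w) = \<bar>c\<bar> * L1norm M f"
  unfolding L1norm_def by (simp add: abs_mult)

lemma L1_uminus[simp]: "L1norm M (\<lambda>w. - f w) = L1norm M f"
  unfolding L1norm_def by simp

lemma L1_minus: "L1norm M (\<lambda>w. f w - g w) = L1norm M (\<lambda>w. g w - f w)"
  unfolding L1norm_def by (simp add: abs_minus_commute)

lemma L1_tri: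
  assumes "integrable M f" "integrable M g" "integrable M h"
  shows "L1norm M (\<lambda>w. f w - h w) \<le> L1norm M (\<lambda>w. f w - g w) + L1norm M (\<lambda>w. g w - h w)"
proof -
  have "L1norm M (\<lambda>w. f w - h w) = L1norm M (\<lambda>w. (f w - g w) + (g w - h w))" by simp
  also have "\<dots> \<le> L1norm M (\<lambda>w. f w - g w) + L1norm M (\<lambda>w. g w - h w)" by (rule L1_add) (use assms in auto)
  finally show ?thesis .
qed

lemma L1_zero_AE:
  assumes "integrable M f" "L1norm M f = 0"
  shows "AE w in M. f w = 0"
proof -
  have "AE w in M. \<bar>f w\<bar> = 0"
    using assms integral_nonneg_eq_0_iff_AE[of M "\<lambda>w. \<bar>f w\<bar>"] unfolding L1norm_def by auto
  then show ?thesis by auto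
qed

lemma L1_AE_cong:
  assumes "f \<in> borel_measurable M" "g \<in> borel_measurable M" "AE w in M. f w = g w"
  shows "L1norm M f = L1norm M g"
  unfolding L1norm_def using assms by (intro integral_cong_AE) auto

lemma L1_sum:
  assumes "\<And>m. m \<in> S \<Longrightarrow> integrable M (g m)"
  shows "L1norm M (\<lambda>w. \<Sum>m\<in>S. g m w) \<le> (\<Sum>m\<in>S. L1norm M (g m))"
  using assms
proof (induction S rule: infinite_finite_induct)
  case (infinite S) then show ?case by (simp add: L1norm_def)
next
  case empty then show ?case by (simp add: L1norm_def)
next
  case (insert x F)
  have "L1norm M (\<lambda>w. \<Sum>m\<in>insert x F. g m w) = L1norm M (\<lambda>w. g x w + (\<Sum>m\<in>F. g m w))"
    using insert by simp
  also have "\<dots> \<le> L1norm M (g x) + L1norm M (\<lambda>w. \<Sum>m\<in>F. g m w)"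
    using insert by (intro L1_add) auto
  also have "\<dots> \<le> L1norm M (g x) + (\<Sum>m\<in>F. L1norm M (g m))"
    using insert by auto
  finally show ?case using insert by simp
qed

lemma L1_wsum:
  assumes "\<And>m. m \<in> S \<Longrightarrow> integrable M (g m)"
  shows "L1norm M (\<lambda>w. \<Sum>m\<in>S. lam m * g m w) \<le> (\<Sum>m\<in>S. \<bar>lam m\<bar> * L1norm M (g m))"
proof -
  have "L1norm M (\<lambda>w. \<Sum>m\<in>S. lam m * g m w) \<le> (\<Sum>m\<in>S. L1norm M (\<lambda>w. lam m * g m w))"
    using assms by (intro L1_sum) auto
  then show ?thesis by (simp add: L1_scale)
qed

lemma fatou_L1:
  assumes f: "\<And>k. integrable M (f k)" and g: "g \<in> borel_measurable M"
    and lim: "AE w in M. (\<lambda>k. f k w) \<longlonglongrightarrow> g w" and B: "\<And>k. L1norm M (f k) \<le> B"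
  shows "integrable M g \<and> L1norm M g \<le> B"
proof -
  have B0: "0 \<le> B" using B[of 0] L1_nonneg[of M "f 0"] by simp
  have "(\<integral>\<^sup>+w. ennreal \<bar>g w\<bar> \<partial>M) = (\<integral>\<^sup>+w. liminf (\<lambda>k. ennreal \<bar>f k w\<bar>) \<partial>M)"
  proof (rule nn_integral_cong_AE)
    show "AE w in M. ennreal \<bar>g w\<bar> = liminf (\<lambda>k. ennreal \<bar>f k w\<bar>)"
      using lim
    proof eventually_elim
      case (elim w)
      then have t: "(\<lambda>k. ennreal \<bar>f k w\<bar>) \<longlonglongrightarrow> ennreal \<bar>g w\<bar>"
        by (intro tendsto_ennrealI tendsto_rabs)
      show ?case by (rule sym, rule lim_imp_Liminf[OF _ t]) simp
    qed
  qed
  also have "\<dots> \<le> liminf (\<lambda>k. \<integral>\<^sup>+w. ennreal \<bar>f k w\<bar> \<partial>M)"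
    using f by (intro nn_integral_liminf) auto
  also have "\<dots> \<le> liminf (\<lambda>k. ennreal B)"
  proof (intro Liminf_mono always_eventually allI)
    fix k
    have "(\<integral>\<^sup>+w. ennreal \<bar>f k w\<bar> \<partial>M) = ennreal (L1norm M (f k))"
      unfolding L1norm_def using f by (intro nn_integral_eq_integral) auto
    then show "(\<integral>\<^sup>+w. ennreal \<bar>f k w\<bar> \<partial>M) \<le> ennreal B" using B[of k] by (simp add: ennreal_leI)
  qed
  also have "\<dots> = ennreal B" by (simp add: Liminf_const)
  finally have nn: "(\<integral>\<^sup>+w. ennreal \<bar>g w\<bar> \<partial>M) \<le> ennreal B" .
  have ig: "integrable M g"
    using g nn by (intro integrableI_bounded) (auto simp: top.not_eq_extremum intro: le_less_trans)
  have "(\<integral>\<^sup>+w. ennreal \<bar>g w\<bar> \<partial>M) = ennreal (L1norm M g)"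
    unfolding L1norm_def using ig by (intro nn_integral_eq_integral) auto
  then have "ennreal (L1norm M g) \<le> ennreal B" using nn by simp
  then have "L1norm M g \<le> B" using B0 by (simp add: ennreal_le_iff)
  then show ?thesis using ig by simp
qed

lemma BL:
  assumes f: "\<And>n. integrable M (f n)" and f0: "integrable M f0"
    and lim: "AE w in M. (\<lambda>n. f n w) \<longlonglongrightarrow> f0 w" and g: "integrable M g"
  shows "(\<lambda>n. L1norm M (\<lambda>w. g w + (f n w - f0 w)) - L1norm M (\<lambda>w. f n w - f0 w)) \<longlonglongrightarrow> L1norm M g"
proof -
  have e: "L1norm M (\<lambda>w. g w + (f n w - f0 w)) - L1norm M (\<lambda>w. f n w - f0 w)
      = (\<integral>w. \<bar>g w + (f n w - f0 w)\<bar> - \<bar>f n w - f0 w\<bar> \<partial>M)" for n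
    unfolding L1norm_def using f f0 g
    by (intro Bochner_Integration.integral_diff[symmetric] integrable_abs Bochner_Integration.integrable_add Bochner_Integration.integrable_diff) auto
  have "(\<lambda>n. (\<integral>w. \<bar>g w + (f n w - f0 w)\<bar> - \<bar>f n w - f0 w\<bar> \<partial>M)) \<longlonglongrightarrow> (\<integral>w. \<bar>g w\<bar> \<partial>M)"
  proof (rule integral_dominated_convergence[where w="\<lambda>w. \<bar>g w\<bar>"])
    show "(\<lambda>w. \<bar>g w\<bar>) \<in> borel_measurable M" using g by auto
    show "(\<lambda>w. \<bar>g w + (f n w - f0 w)\<bar> - \<bar>f n w - f0 w\<bar>) \<in> borel_measurable M" for n
      using f f0 g by auto
    show "integrable M (\<lambda>w. \<bar>g w\<bar>)" using g by auto
    show "AE w in M. (\<lambda>n. \<bar>g w + (f n w - f0 w)\<bar> - \<bar>f n w - f0 w\<bar>) \<longlonglongrightarrow> \<bar>g w\<bar>"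
      using lim
    proof eventually_elim
      case (elim w)
      then have "(\<lambda>n. f n w - f0 w) \<longlonglongrightarrow> 0" by (simp add: LIM_zero)
      then have "(\<lambda>n. \<bar>g w + (f n w - f0 w)\<bar> - \<bar>f n w - f0 w\<bar>) \<longlonglongrightarrow> \<bar>g w + 0\<bar> - \<bar>0\<bar>"
        by (intro tendsto_intros)
      then show ?case by simp
    qed
    show "AE w in M. norm (\<bar>g w + (f n w - f0 w)\<bar> - \<bar>f n w - f0 w\<bar>) \<le> \<bar>g w\<bar>" for n
      by (intro AE_I2) auto
  qed
  moreover have "(\<lambda>n. L1norm M (\<lambda>w. g w + (f n w - f0 w)) - L1norm M (\<lambda>w. f n w - f0 w))
     = (\<lambda>n. (\<integral>w. \<bar>g w + (f n w - f0 w)\<bar> - \<bar>f n w - f0 w\<bar> \<partial>M))"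
    by (rule ext) (rule e)
  ultimately show ?thesis by (simp only: L1norm_def[of M g])
qed

definition cc :: "nat \<Rightarrow> (nat \<Rightarrow> real) \<Rightarrow> nat \<Rightarrow> bool" where
  "cc k lam N \<longleftrightarrow> (\<forall>m. 0 \<le> lam m) \<and> (\<forall>m. (m < k \<or> N \<le> m) \<longrightarrow> lam m = 0) \<and> (\<Sum>m<N. lam m) = 1"

definition comb :: "(nat \<Rightarrow> 'a \<Rightarrow> real) \<Rightarrow> (nat \<Rightarrow> real) \<Rightarrow> nat \<Rightarrow> 'a \<Rightarrow> real" where
  "comb u lam N = (\<lambda>w. \<Sum>m<N. lam m * u m w)"

lemma comb_ind:
  assumes cv: "L1_convex C" and af: "L1_affine M C T" and u: "\<forall>m. u m \<in> C"
  shows "(\<forall>m. 0 \<le> lam m) \<Longrightarrow> (\<Sum>m<N. lam m) = 1 \<Longrightarrow>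
    comb u lam N \<in> C \<and> (AE w in M. T (comb u lam N) w = (\<Sum>m<N. lam m * T (u m) w))"
proof (induction N arbitrary: lam)
  case 0 then show ?case by simp
next
  case (Suc N)
  define s where "s = (\<Sum>m<N. lam m)"
  have s0: "0 \<le> s" unfolding s_def using Suc.prems by (intro sum_nonneg) auto
  have lN: "lam N = 1 - s" using Suc.prems unfolding s_def by simp
  show ?case
  proof (cases "s = 0")
    case True
    then have z: "\<forall>m<N. lam m = 0" unfolding s_def using Suc.prems
      by (subst (asm) sum_nonneg_eq_0_iff) auto
    have e: "comb u lam (Suc N) = u N"
      using z lN True unfolding comb_def by (auto simp: fun_eq_iff)
    have e2: "(\<Sum>m<Suc N. lam m * T (u m) w) = T (u N) w" for w
      using z lN True by simp
    show ?thesis using u e e2 by simp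
  next
    case False
    then have sp: "0 < s" using s0 by simp
    define lam' where "lam' m = lam m / s" for m
    have "(\<Sum>m<N. lam' m) = 1" unfolding lam'_def s_def[symmetric] sum_divide_distrib[symmetric]
      using sp by simp
    moreover have "\<forall>m. 0 \<le> lam' m" unfolding lam'_def using Suc.prems s0 by auto
    ultimately have IH: "comb u lam' N \<in> C"
      "AE w in M. T (comb u lam' N) w = (\<Sum>m<N. lam' m * T (u m) w)"
      using Suc.IH by blast+
    have s1: "s \<le> 1" using lN Suc.prems by (metis diff_ge_0_iff_ge)
    have e: "comb u lam (Suc N) = (\<lambda>w. s * comb u lam' N w + (1 - s) * u N w)"
      unfolding comb_def lam'_def using sp lN
      by (auto simp: fun_eq_iff sum_distrib_left)
    have inC: "comb u lam (Suc N) \<in> C"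
      unfolding e using cv IH(1) u s0 s1 unfolding L1_convex_def by blast
    have "AE w in M. T (\<lambda>w. s * comb u lam' N w + (1 - s) * u N w) w
        = s * T (comb u lam' N) w + (1 - s) * T (u N) w"
      using af IH(1) u s0 s1 unfolding L1_affine_def by blast
    then have "AE w in M. T (comb u lam (Suc N)) w = (\<Sum>m<Suc N. lam m * T (u m) w)"
      using IH(2)
    proof eventually_elim
      case (elim w)
      have "(\<Sum>m<Suc N. lam m * T (u m) w) = s * (\<Sum>m<N. lam' m * T (u m) w) + (1 - s) * T (u N) w"
        unfolding lam'_def using sp lN by (simp add: sum_distrib_left)
      then show ?case using elim e by simp
    qed
    then show ?thesis using inC by simp
  qed
qed

lemma comb_dist:
  assumes "\<And>m. integrable M (u m)" "integrable M y" "\<forall>m. 0 \<le> lam m" "(\<Sum>m<N. lam m) = 1"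
  shows "L1norm M (\<lambda>w. comb u lam N w - y w) \<le> (\<Sum>m<N. lam m * L1norm M (\<lambda>w. u m w - y w))"
proof -
  have "(\<lambda>w. comb u lam N w - y w) = (\<lambda>w. \<Sum>m<N. lam m * (u m w - y w))"
    using assms(4) by (auto simp: fun_eq_iff comb_def sum_subtractf right_diff_distrib sum_distrib_right[symmetric])
  then have "L1norm M (\<lambda>w. comb u lam N w - y w) \<le> (\<Sum>m<N. \<bar>lam m\<bar> * L1norm M (\<lambda>w. u m w - y w))"
    using assms L1_wsum[of "{..<N}" M "\<lambda>m w. u m w - y w" lam] by simp
  then show ?thesis using assms(3) by simp
qed

lemma sum_if_Suc: "(\<Sum>j<Suc m. (if 1 \<le> j then a j else 0)) = (\<Sum>j=1..m. (a j :: real))"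
  by (induction m) auto

lemma exp_sq_id: "(exp (-(a/2)) - exp (-(b/2)))^2 = exp (-a) + exp (-b) - 2 * exp (-((a+b)/2)) " for a b :: real
proof -
  have 1: "exp (-(a/2))^2 = exp (-a)" by (simp add: power2_eq_square exp_add[symmetric])
  have 2: "exp (-(b/2))^2 = exp (-b)" by (simp add: power2_eq_square exp_add[symmetric])
  have 3: "exp (-(a/2)) * exp (-(b/2)) = exp (-((a+b)/2))" by (simp add: exp_add[symmetric] field_simps)
  show ?thesis unfolding power2_diff 1 2 mult.assoc 3 by simp
qed

lemma abs_le_eps: "0 < e \<Longrightarrow> \<bar>d\<bar> \<le> e + d^2 / e" for d e :: real
proof -
  assume e: "0 < e"
  have "0 \<le> (\<bar>d\<bar> - e)^2" by simp
  also have "\<dots> = d^2 - 2 * e * \<bar>d\<bar> + e^2" by (simp add: power2_diff power2_abs mult_ac)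
  finally have a: "2 * e * \<bar>d\<bar> \<le> e^2 + d^2" by simp
  have "0 \<le> e * \<bar>d\<bar>" using e by simp
  then have "e * \<bar>d\<bar> \<le> e^2 + d^2" using a by linarith
  then have "\<bar>d\<bar> \<le> (e^2 + d^2) / e" using e by (simp add: pos_le_divide_eq mult.commute)
  also have "\<dots> = e + d^2 / e" using e by (simp add: add_divide_distrib power2_eq_square)
  finally show ?thesis .
qed

lemma cc_mono: "cc k lam N \<Longrightarrow> j \<le> k \<Longrightarrow> cc j lam N" unfolding cc_def by auto

lemma cc_ext:
  assumes "cc k lam N" "N \<le> N'"
  shows "(\<Sum>m<N'. lam m * F m) = (\<Sum>m<N. lam m * F m)"
  using assms unfolding cc_def by (intro sum.mono_neutral_right) auto

lemma cc_mid:
  assumes "cc k l1 N1" "cc k l2 N2"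
  shows "cc k (\<lambda>m. (l1 m + l2 m) / 2) (max N1 N2)"
proof -
  have s1: "(\<Sum>m<max N1 N2. l1 m) = 1" using cc_ext[OF assms(1), of "max N1 N2" "\<lambda>_. 1"] assms(1) by (simp add: cc_def)
  have s2: "(\<Sum>m<max N1 N2. l2 m) = 1" using cc_ext[OF assms(2), of "max N1 N2" "\<lambda>_. 1"] assms(2) by (simp add: cc_def)
  have "(\<Sum>m<max N1 N2. (l1 m + l2 m)/2) = ((\<Sum>m<max N1 N2. l1 m) + (\<Sum>m<max N1 N2. l2 m))/2"
    by (simp add: sum.distrib sum_divide_distrib[symmetric])
  then show ?thesis using assms s1 s2 unfolding cc_def by auto
qed

lemma cc_single: "cc k (\<lambda>m. if m = k then 1 else 0) (Suc k)"
  unfolding cc_def by auto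

lemma mid_sum:
  assumes "cc k l1 N1" "cc k' l2 N2"
  shows "(\<Sum>m<max N1 N2. (l1 m + l2 m) / 2 * F m) = ((\<Sum>m<N1. l1 m * F m) + (\<Sum>m<N2. l2 m * F m)) / 2"
proof -
  have "(\<Sum>m<max N1 N2. (l1 m + l2 m) / 2 * F m) = (\<Sum>m<max N1 N2. (l1 m * F m + l2 m * F m) / 2)"
    by (intro sum.cong) (auto simp: field_simps)
  also have "\<dots> = (\<Sum>m<max N1 N2. l1 m * F m + l2 m * F m) / 2"
    by (rule sum_divide_distrib[symmetric])
  also have "\<dots> = ((\<Sum>m<max N1 N2. l1 m * F m) + (\<Sum>m<max N1 N2. l2 m * F m)) / 2"
    by (simp only: sum.distrib)
  also have "(\<Sum>m<max N1 N2. l1 m * F m) = (\<Sum>m<N1. l1 m * F m)"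
    by (rule cc_ext[OF assms(1)]) simp
  also have "(\<Sum>m<max N1 N2. l2 m * F m) = (\<Sum>m<N2. l2 m * F m)"
    by (rule cc_ext[OF assms(2)]) simp
  finally show ?thesis .
qed

lemma aux_cauchy:
  fixes G :: "nat \<Rightarrow> 'a \<Rightarrow> real"
  assumes hm: "h \<in> borel_measurable M" and hpos: "\<And>x. 0 < h x" and hint: "integrable M h"
    and Gm: "\<And>k. G k \<in> borel_measurable M" and Gb: "\<And>k x. \<bar>G k x\<bar> \<le> 1"
    and cau: "\<And>e. e > 0 \<Longrightarrow> \<exists>N. \<forall>k\<ge>N. \<forall>j\<ge>N. (\<integral>x. h x * (G k x - G j x)^2 \<partial>M) < e"
  shows "\<exists>r. strict_mono r \<and> (AE x in M. convergent (\<lambda>n. G (r n) x))"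
proof -
  define s where "s k x = h x * G k x" for k x
  have sint: "integrable M (s k)" for k
    unfolding s_def
  proof (rule Bochner_Integration.integrable_bound[OF hint])
    show "(\<lambda>x. h x * G k x) \<in> borel_measurable M" using hm Gm by auto
    have "\<bar>h x\<bar> * \<bar>G k x\<bar> \<le> \<bar>h x\<bar>" for x by (rule mult_left_le) (auto simp: Gb)
    then show "AE x in M. norm (h x * G k x) \<le> norm (h x)"
      by (intro AE_I2) (simp add: abs_mult)
  qed
  have h4: "integrable M (\<lambda>x. 4 * h x)" using hint by simp
  have hb: "integrable M (\<lambda>x. h x * (G i x - G j x)^2)" for i j
  proof (rule Bochner_Integration.integrable_bound[OF h4])
    show "(\<lambda>x. h x * (G i x - G j x)^2) \<in> borel_measurable M" using hm Gm by auto
    have "\<bar>G i x - G j x\<bar> \<le> 2" for x using Gb[of i x] Gb[of j x] by linarith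
    have "\<bar>h x\<bar> * (G i x - G j x)^2 \<le> \<bar>h x\<bar> * 4" for x
    proof (rule mult_left_mono)
      have "\<bar>G i x - G j x\<bar> \<le> 2" using Gb[of i x] Gb[of j x] by linarith
      then have "\<bar>G i x - G j x\<bar>^2 \<le> 2^2" by (intro power_mono) auto
      then show "(G i x - G j x)^2 \<le> 4" by simp
    qed auto
    then show "AE x in M. norm (h x * (G i x - G j x)^2) \<le> norm (4 * h x)"
      by (intro AE_I2) (simp add: abs_mult mult.commute)
  qed
  have "\<exists>N. \<forall>i\<ge>N. \<forall>j\<ge>N. (\<integral>x. norm (s i x - s j x) \<partial>M) < e" if e: "e > 0" for e
  proof -
    define H where "H = (\<integral>x. h x \<partial>M)"
    have H0: "0 \<le> H" unfolding H_def using hpos by (intro integral_nonneg_AE) (auto intro: less_imp_le)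
    define d where "d = e / (2 * (H + 1))"
    have d: "d > 0" using e H0 unfolding d_def by auto
    have dH: "d * H \<le> e / 2"
    proof -
      have "d * H = e / 2 * (H / (H + 1))" unfolding d_def by (simp add: field_simps)
      also have "\<dots> \<le> e / 2 * 1" using H0 e by (intro mult_left_mono) auto
      finally show ?thesis by simp
    qed
    obtain N where N: "\<forall>k\<ge>N. \<forall>j\<ge>N. (\<integral>x. h x * (G k x - G j x)^2 \<partial>M) < d * e / 2"
      using cau[of "d*e/2"] d e by auto
    have "(\<integral>x. norm (s i x - s j x) \<partial>M) < e" if ij: "i \<ge> N" "j \<ge> N" for i j
    proof -
      have "(\<integral>x. norm (s i x - s j x) \<partial>M) \<le> (\<integral>x. d * h x + h x * (G i x - G j x)^2 / d \<partial>M)"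
      proof (rule integral_mono)
        show "integrable M (\<lambda>x. norm (s i x - s j x))" using sint by auto
        show "integrable M (\<lambda>x. d * h x + h x * (G i x - G j x)^2 / d)"
          using hint hb by auto
        fix x
        have "norm (s i x - s j x) = h x * \<bar>G i x - G j x\<bar>"
          unfolding s_def using hpos[of x] by (simp add: abs_mult right_diff_distrib[symmetric])
        also have "\<dots> \<le> h x * (d + (G i x - G j x)^2 / d)"
          using hpos[of x] abs_le_eps[OF d] by (intro mult_left_mono) auto
        also have "\<dots> = d * h x + h x * (G i x - G j x)^2 / d" by (simp add: algebra_simps)
        finally show "norm (s i x - s j x) \<le> d * h x + h x * (G i x - G j x)^2 / d" .
      qed
      also have "\<dots> = d * H + (\<integral>x. h x * (G i x - G j x)^2 \<partial>M) / d"
        unfolding H_def using hint hb by simp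
      also have "\<dots> < d * H + (d * e / 2) / d"
        using N ij d by (intro add_strict_left_mono divide_strict_right_mono) auto
      also have "\<dots> \<le> e" using dH d by simp
      finally show ?thesis .
    qed
    then show ?thesis by blast
  qed
  then obtain r where r: "strict_mono r" "AE x in M. Cauchy (\<lambda>i. s (r i) x)"
    by (rule cauchy_L1_AE_cauchy_subseq[OF sint])
  have "AE x in M. convergent (\<lambda>n. G (r n) x)"
    using r(2)
  proof eventually_elim
    case (elim x)
    then have "convergent (\<lambda>i. s (r i) x)" using Cauchy_convergent_iff by blast
    then have "convergent (\<lambda>i. (1 / h x) * s (r i) x)"
      using hpos[of x] by (subst convergent_mult_const_iff) auto
    moreover have "(\<lambda>i. (1 / h x) * s (r i) x) = (\<lambda>i. G (r i) x)"
      unfolding s_def using hpos[of x] by auto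
    ultimately show ?case by simp
  qed
  then show ?thesis using r(1) by blast
qed

lemma conv_from_exp:
  fixes u :: "nat \<Rightarrow> real"
  assumes u0: "\<And>n. 0 \<le> u n" and cv: "convergent (\<lambda>n. exp (- (u n / 2)))"
    and li: "liminf (\<lambda>n. ennreal (u n)) \<noteq> \<infinity>"
  shows "convergent u"
proof -
  obtain \<gamma> where g: "(\<lambda>n. exp (- (u n / 2))) \<longlonglongrightarrow> \<gamma>" using cv by (auto simp: convergent_def)
  obtain b where b: "liminf (\<lambda>n. ennreal (u n)) = ennreal b" "0 \<le> b"
    using li by (cases "liminf (\<lambda>n. ennreal (u n))" rule: ennreal_cases) auto
  have "\<not> (ennreal (b + 1) \<le> liminf (\<lambda>n. ennreal (u n)))" using b by (simp add: ennreal_le_iff)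
  then obtain y where y: "y < ennreal (b + 1)" "\<not> eventually (\<lambda>n. y < ennreal (u n)) sequentially"
    unfolding le_Liminf_iff by auto
  have fr: "frequently (\<lambda>n. u n < b + 1) sequentially"
  proof -
    have "frequently (\<lambda>n. ennreal (u n) \<le> y) sequentially"
      using y(2) by (simp add: not_eventually not_less)
    then show ?thesis
    proof (rule frequently_elim1)
      fix n assume "ennreal (u n) \<le> y"
      then have "ennreal (u n) < ennreal (b + 1)" using y(1) by (rule le_less_trans)
      then show "u n < b + 1" using b(2) u0[of n] by (subst (asm) ennreal_less_iff) auto
    qed
  qed
  define c where "c = exp (- ((b + 1) / 2))"
  have c0: "0 < c" unfolding c_def by simp
  have fr2: "frequently (\<lambda>n. c \<le> exp (- (u n / 2))) sequentially"
    using fr by (rule frequently_elim1) (auto simp: c_def)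
  have "c \<le> \<gamma>"
  proof (rule ccontr)
    assume "\<not> c \<le> \<gamma>"
    then have "eventually (\<lambda>n. exp (- (u n / 2)) < c) sequentially"
      using order_tendstoD(2)[OF g] by auto
    from frequently_eventually_frequently[OF fr2 this]
    have "frequently (\<lambda>n. False) sequentially" by (rule frequently_elim1) auto
    then show False by simp
  qed
  then have gp: "0 < \<gamma>" using c0 by simp
  have "(\<lambda>n. -2 * ln (exp (- (u n / 2)))) \<longlonglongrightarrow> -2 * ln \<gamma>"
    using g gp by (intro tendsto_intros) auto
  then have "u \<longlonglongrightarrow> -2 * ln \<gamma>" by simp
  then show ?thesis by (auto simp: convergent_def)
qed

lemma convex_ae:
  fixes f :: "nat \<Rightarrow> 'a \<Rightarrow> real"
  assumes sf: "sigma_finite_measure M" and f: "\<And>k. integrable M (f k)" and B: "\<And>k. L1norm M (f k) \<le> B"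
  shows "\<exists>lam N g. (\<forall>k. cc k (lam k) (N k)) \<and> g \<in> borel_measurable M \<and>
           (AE w in M. (\<lambda>k. comb f (lam k) (N k) w) \<longlonglongrightarrow> g w)"
proof -
  have "\<exists>h::'a \<Rightarrow> real. h \<in> borel_measurable M \<and> (\<forall>x. 0 < h x) \<and> (\<forall>x. h x \<le> 1) \<and> integrable M h"
    by (rule sigma_finite_measure.obtain_positive_integrable_function[OF sf]) (meson borel_measurable_integrable)
  then obtain h :: "'a \<Rightarrow> real" where hm: "h \<in> borel_measurable M" and hpos: "\<And>x. 0 < h x" and h1: "\<And>x. h x \<le> 1"
    and hint: "integrable M h" by blast
  have fm[measurable]: "f k \<in> borel_measurable M" for k using f by auto
  note hm[measurable]
  define p where "p k w = max (f k w) 0" for k w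
  define q where "q k w = max (- f k w) 0" for k w
  define P where "P lam N w = (\<Sum>m<N. lam m * p m w)" for lam N w
  define Q where "Q lam N w = (\<Sum>m<N. lam m * q m w)" for lam N w
  define E where "E lam N w = h w * (exp (- P lam N w) + exp (- Q lam N w))" for lam N w
  define Psi where "Psi lam N = (\<integral>w. E lam N w \<partial>M)" for lam N
  define H where "H = (\<integral>w. h w \<partial>M)"
  have pm[measurable]: "p k \<in> borel_measurable M" for k unfolding p_def by measurable
  have qm[measurable]: "q k \<in> borel_measurable M" for k unfolding q_def by measurable
  have Pm[measurable]: "P lam N \<in> borel_measurable M" for lam N unfolding P_def by measurable
  have Qm[measurable]: "Q lam N \<in> borel_measurable M" for lam N unfolding Q_def by measurable
  have Em[measurable]: "E lam N \<in> borel_measurable M" for lam N unfolding E_def by measurable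
  have p0: "0 \<le> p k w" for k w unfolding p_def by simp
  have q0: "0 \<le> q k w" for k w unfolding q_def by simp
  have P0: "0 \<le> P lam N w" if "\<forall>m. 0 \<le> lam m" for lam N w
    unfolding P_def using p0 that by (auto intro: sum_nonneg)
  have Q0: "0 \<le> Q lam N w" if "\<forall>m. 0 \<le> lam m" for lam N w
    unfolding Q_def using q0 that by (auto intro: sum_nonneg)
  have Eb: "0 \<le> E lam N w \<and> E lam N w \<le> 2 * h w" if l: "\<forall>m. 0 \<le> lam m" for lam N w
  proof -
    have e1: "exp (- P lam N w) \<le> 1" using P0[OF l, of N w] by simp
    have e2: "exp (- Q lam N w) \<le> 1" using Q0[OF l, of N w] by simp
    have "exp (- P lam N w) + exp (- Q lam N w) \<le> 2" using e1 e2 by linarith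
    then have "h w * (exp (- P lam N w) + exp (- Q lam N w)) \<le> h w * 2"
      using hpos[of w] by (intro mult_left_mono) auto
    moreover have "0 \<le> h w * (exp (- P lam N w) + exp (- Q lam N w))"
      using hpos[of w] by (intro mult_nonneg_nonneg) auto
    ultimately show ?thesis unfolding E_def by simp
  qed
  have h2: "integrable M (\<lambda>w. 2 * h w)" using hint by simp
  have Eint: "integrable M (E lam N)" if l: "\<forall>m. 0 \<le> lam m" for lam N
  proof (rule Bochner_Integration.integrable_bound[OF h2])
    show "E lam N \<in> borel_measurable M" by measurable
    show "AE w in M. norm (E lam N w) \<le> norm (2 * h w)"
      using Eb[OF l] hpos by (intro AE_I2) (auto simp: abs_of_nonneg less_imp_le)
  qed
  have Psib: "0 \<le> Psi lam N \<and> Psi lam N \<le> 2 * H" if l: "\<forall>m. 0 \<le> lam m" for lam N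
  proof
    show "0 \<le> Psi lam N" unfolding Psi_def using Eb[OF l] by (intro integral_nonneg_AE) auto
    have "Psi lam N \<le> (\<integral>w. 2 * h w \<partial>M)" unfolding Psi_def
      using Eb[OF l] Eint[OF l] h2 by (intro integral_mono) auto
    then show "Psi lam N \<le> 2 * H" unfolding H_def by simp
  qed
  define Ks where "Ks k = {Psi lam N | lam N. cc k lam N}" for k
  define a where "a k = Inf (Ks k)" for k
  have Kne: "Ks k \<noteq> {}" for k using cc_single[of k] unfolding Ks_def by blast
  have Kbb: "bdd_below (Ks k)" for k
    unfolding Ks_def using Psib by (auto simp: cc_def intro!: bdd_belowI[of _ 0])
  have a_le: "a k \<le> Psi lam N" if "cc k lam N" for k lam N
    unfolding a_def by (rule cInf_lower) (use that Kbb in \<open>auto simp: Ks_def\<close>)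
  have a_mono: "a k \<le> a (Suc k)" for k
    unfolding a_def
  proof (rule cInf_superset_mono[OF Kne Kbb])
    show "Ks (Suc k) \<subseteq> Ks k" unfolding Ks_def using cc_mono[of "Suc k" _ _ k] by auto
  qed
  have a_bd: "a k \<le> 2 * H" for k
  proof -
    have c: "\<forall>m. 0 \<le> (if m = k then 1 else (0::real))" by simp
    have "0 \<le> Psi (\<lambda>m. if m = k then 1 else 0) (Suc k) \<and> Psi (\<lambda>m. if m = k then 1 else 0) (Suc k) \<le> 2 * H"
      by (rule Psib[OF c])
    then have "Psi (\<lambda>m. if m = k then 1 else 0) (Suc k) \<le> 2 * H" by (rule conjunct2)
    then show ?thesis using a_le[OF cc_single[of k]] by linarith
  qed
  have inc: "incseq a" using a_mono by (simp add: incseq_SucI)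
  define A where "A = (SUP k. a k)"
  have bda: "bdd_above (range a)" by (rule bdd_aboveI2[of _ _ "2 * H"]) (rule a_bd)
  have aA: "a \<longlonglongrightarrow> A" unfolding A_def by (rule LIMSEQ_incseq_SUP[OF bda inc])
  have a_le_A: "a k \<le> A" for k unfolding A_def by (rule cSUP_upper[OF _ bda]) auto
  have "\<forall>k. \<exists>x. cc k (fst x) (snd x) \<and> Psi (fst x) (snd x) < a k + 1 / Suc k"
  proof
    fix k
    have "Inf (Ks k) < a k + 1 / Suc k" unfolding a_def by simp
    then obtain y where "y \<in> Ks k" "y < a k + 1 / Suc k" using cInf_lessD[OF Kne] by blast
    then show "\<exists>x. cc k (fst x) (snd x) \<and> Psi (fst x) (snd x) < a k + 1 / Suc k"
      unfolding Ks_def by auto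
  qed
  then obtain F where F: "\<And>k. cc k (fst (F k)) (snd (F k)) \<and> Psi (fst (F k)) (snd (F k)) < a k + 1 / Suc k"
    by metis
  define L where "L k = fst (F k)" for k
  define NN where "NN k = snd (F k)" for k
  have LN: "cc k (L k) (NN k)" for k using F unfolding L_def NN_def by auto
  have PsiL: "Psi (L k) (NN k) < a k + 1 / Suc k" for k using F unfolding L_def NN_def by auto
  have Lnn: "\<forall>m. 0 \<le> L k m" for k using LN[of k] unfolding cc_def by auto
  define G where "G k w = exp (- (P (L k) (NN k) w / 2))" for k w
  define R where "R k w = exp (- (Q (L k) (NN k) w / 2))" for k w
  have Gm[measurable]: "G k \<in> borel_measurable M" for k unfolding G_def by measurable
  have Rm[measurable]: "R k \<in> borel_measurable M" for k unfolding R_def by measurable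
  have Gb: "\<bar>G k w\<bar> \<le> 1" for k w unfolding G_def using P0[OF Lnn[of k], of "NN k" w] by auto
  have Rb: "\<bar>R k w\<bar> \<le> 1" for k w unfolding R_def using Q0[OF Lnn[of k], of "NN k" w] by auto
  define eta where "eta k = A - a k + 2 / Suc k" for k
  have key: "(\<integral>w. h w * ((G k w - G j w)^2 + (R k w - R j w)^2) \<partial>M) \<le> eta k" if kj: "k \<le> j" for k j
  proof -
    define mu where "mu m = (L k m + L j m) / 2" for m
    define NM where "NM = max (NN k) (NN j)"
    have ccm: "cc k mu NM" unfolding mu_def NM_def using cc_mid[OF LN[of k] cc_mono[OF LN[of j] kj]] .
    have munn: "\<forall>m. 0 \<le> mu m" using ccm unfolding cc_def by auto
    have Pmid: "P mu NM w = (P (L k) (NN k) w + P (L j) (NN j) w) / 2" for w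
      unfolding P_def mu_def NM_def by (rule mid_sum[OF LN[of k] LN[of j]])
    have Qmid: "Q mu NM w = (Q (L k) (NN k) w + Q (L j) (NN j) w) / 2" for w
      unfolding Q_def mu_def NM_def by (rule mid_sum[OF LN[of k] LN[of j]])
    have pt: "h w * ((G k w - G j w)^2 + (R k w - R j w)^2)
       = E (L k) (NN k) w + E (L j) (NN j) w - 2 * E mu NM w" for w
      unfolding G_def R_def E_def Pmid Qmid exp_sq_id by (simp add: algebra_simps)
    have "(\<integral>w. h w * ((G k w - G j w)^2 + (R k w - R j w)^2) \<partial>M)
        = (\<integral>w. E (L k) (NN k) w + E (L j) (NN j) w - 2 * E mu NM w \<partial>M)"
      unfolding pt ..
    also have "\<dots> = Psi (L k) (NN k) + Psi (L j) (NN j) - 2 * Psi mu NM"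
      unfolding Psi_def using Eint[OF Lnn[of k]] Eint[OF Lnn[of j]] Eint[OF munn] by simp
    also have "\<dots> \<le> (a k + 1 / Suc k) + (a j + 1 / Suc j) - 2 * a k"
      using PsiL[of k] PsiL[of j] a_le[OF ccm] by simp
    also have "\<dots> \<le> eta k"
    proof -
      have "1 / real (Suc j) \<le> 1 / real (Suc k)" using kj by (intro divide_left_mono) auto
      then show ?thesis unfolding eta_def using a_le_A[of j] by simp
    qed
    finally show ?thesis .
  qed
  have hD: "integrable M (\<lambda>w. h w * ((G k w - G j w)^2 + (R k w - R j w)^2))" for k j
  proof -
    have "integrable M (\<lambda>w. E (L k) (NN k) w + E (L j) (NN j) w - 2 * E (\<lambda>m. (L k m + L j m)/2) (max (NN k) (NN j)) w)"
      using Eint[OF Lnn[of k]] Eint[OF Lnn[of j]] Eint[of "\<lambda>m. (L k m + L j m)/2"] Lnn by auto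
    moreover have "h w * ((G k w - G j w)^2 + (R k w - R j w)^2) =
      E (L k) (NN k) w + E (L j) (NN j) w - 2 * E (\<lambda>m. (L k m + L j m)/2) (max (NN k) (NN j)) w" for w
    proof -
      have Pmid: "P (\<lambda>m. (L k m + L j m)/2) (max (NN k) (NN j)) w = (P (L k) (NN k) w + P (L j) (NN j) w) / 2"
        unfolding P_def by (rule mid_sum[OF LN[of k] LN[of j]])
      have Qmid: "Q (\<lambda>m. (L k m + L j m)/2) (max (NN k) (NN j)) w = (Q (L k) (NN k) w + Q (L j) (NN j) w) / 2"
        unfolding Q_def by (rule mid_sum[OF LN[of k] LN[of j]])
      show ?thesis unfolding G_def R_def E_def Pmid Qmid exp_sq_id by (simp add: algebra_simps)
    qed
    ultimately show ?thesis by simp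
  qed
  have eta0: "eta \<longlonglongrightarrow> 0"
  proof -
    have "(\<lambda>k. A - a k) \<longlonglongrightarrow> A - A" using aA by (intro tendsto_intros)
    moreover have "(\<lambda>k. 2 * inverse (real (Suc k))) \<longlonglongrightarrow> 2 * 0"
      by (intro tendsto_intros LIMSEQ_inverse_real_of_nat)
    ultimately have "(\<lambda>k. (A - a k) + 2 * inverse (real (Suc k))) \<longlonglongrightarrow> (A - A) + 2 * 0"
      by (intro tendsto_add)
    then show ?thesis unfolding eta_def by (simp add: divide_inverse)
  qed
  have cauG: "\<exists>N. \<forall>k\<ge>N. \<forall>j\<ge>N. (\<integral>x. h x * (G k x - G j x)^2 \<partial>M) < e" if e: "e > 0" for e
  proof -
    obtain N where N: "\<forall>n\<ge>N. eta n < e"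
      using order_tendstoD(2)[OF eta0 e] by (auto simp: eventually_sequentially)
    have hG: "integrable M (\<lambda>x. h x * (G k x - G j x)^2)" for k j
    proof (rule Bochner_Integration.integrable_bound[OF hD[of k j]])
      show "AE x in M. norm (h x * (G k x - G j x)^2) \<le> norm (h x * ((G k x - G j x)^2 + (R k x - R j x)^2))"
        using hpos by (intro AE_I2) (auto simp: abs_mult intro!: mult_left_mono)
    qed measurable
    have one: "(\<integral>x. h x * (G k x - G j x)^2 \<partial>M) < e" if "k \<le> j" "k \<ge> N" for k j
    proof -
      have "(\<integral>x. h x * (G k x - G j x)^2 \<partial>M) \<le> (\<integral>w. h w * ((G k w - G j w)^2 + (R k w - R j w)^2) \<partial>M)"
        using hG hD hpos by (intro integral_mono) (auto intro!: mult_left_mono less_imp_le)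
      also have "\<dots> \<le> eta k" using key that by auto
      also have "\<dots> < e" using N that by auto
      finally show ?thesis .
    qed
    have "(\<integral>x. h x * (G k x - G j x)^2 \<partial>M) < e" if "k \<ge> N" "j \<ge> N" for k j
    proof (cases "k \<le> j")
      case True then show ?thesis using one that by auto
    next
      case False
      have "(\<integral>x. h x * (G k x - G j x)^2 \<partial>M) = (\<integral>x. h x * (G j x - G k x)^2 \<partial>M)"
        by (simp add: power2_commute)
      then show ?thesis using one[of j k] that False by auto
    qed
    then show ?thesis by blast
  qed
  have cauR: "\<exists>N. \<forall>k\<ge>N. \<forall>j\<ge>N. (\<integral>x. h x * (R k x - R j x)^2 \<partial>M) < e" if e: "e > 0" for e
  proof -
    obtain N where N: "\<forall>n\<ge>N. eta n < e"
      using order_tendstoD(2)[OF eta0 e] by (auto simp: eventually_sequentially)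
    have hR: "integrable M (\<lambda>x. h x * (R k x - R j x)^2)" for k j
    proof (rule Bochner_Integration.integrable_bound[OF hD[of k j]])
      show "AE x in M. norm (h x * (R k x - R j x)^2) \<le> norm (h x * ((G k x - G j x)^2 + (R k x - R j x)^2))"
        using hpos by (intro AE_I2) (auto simp: abs_mult intro!: mult_left_mono)
    qed measurable
    have one: "(\<integral>x. h x * (R k x - R j x)^2 \<partial>M) < e" if "k \<le> j" "k \<ge> N" for k j
    proof -
      have "(\<integral>x. h x * (R k x - R j x)^2 \<partial>M) \<le> (\<integral>w. h w * ((G k w - G j w)^2 + (R k w - R j w)^2) \<partial>M)"
        using hR hD hpos by (intro integral_mono) (auto intro!: mult_left_mono less_imp_le)
      also have "\<dots> \<le> eta k" using key that by auto
      also have "\<dots> < e" using N that by auto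
      finally show ?thesis .
    qed
    have "(\<integral>x. h x * (R k x - R j x)^2 \<partial>M) < e" if "k \<ge> N" "j \<ge> N" for k j
    proof (cases "k \<le> j")
      case True then show ?thesis using one that by auto
    next
      case False
      have "(\<integral>x. h x * (R k x - R j x)^2 \<partial>M) = (\<integral>x. h x * (R j x - R k x)^2 \<partial>M)"
        by (simp add: power2_commute)
      then show ?thesis using one[of j k] that False by auto
    qed
    then show ?thesis by blast
  qed
  obtain r1 where r1: "strict_mono r1" "AE x in M. convergent (\<lambda>n. G (r1 n) x)"
    using aux_cauchy[OF hm hpos hint Gm Gb cauG] by blast
  have cauR1: "\<exists>N. \<forall>k\<ge>N. \<forall>j\<ge>N. (\<integral>x. h x * (R (r1 k) x - R (r1 j) x)^2 \<partial>M) < e" if e: "e > 0" for e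
  proof -
    obtain N where "\<forall>k\<ge>N. \<forall>j\<ge>N. (\<integral>x. h x * (R k x - R j x)^2 \<partial>M) < e" using cauR[OF e] by blast
    moreover have "k \<le> r1 k" for k using seq_suble[OF r1(1)] by blast
    ultimately show ?thesis by (meson order_trans)
  qed
  obtain r2 where r2: "strict_mono r2" "AE x in M. convergent (\<lambda>n. R (r1 (r2 n)) x)"
    using aux_cauchy[OF hm hpos hint, of "\<lambda>n. R (r1 n)"] Rm Rb cauR1 by blast
  define r where "r = r1 \<circ> r2"
  have r: "strict_mono r" unfolding r_def using r1(1) r2(1) by (rule strict_mono_o)
  have rge: "k \<le> r k" for k using seq_suble[OF r] by blast
  have cG: "AE x in M. convergent (\<lambda>n. G (r n) x)"
    using r1(2)
  proof eventually_elim
    case (elim x)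
    then obtain l where "(\<lambda>n. G (r1 n) x) \<longlonglongrightarrow> l" by (auto simp: convergent_def)
    then have "(\<lambda>n. G (r1 (r2 n)) x) \<longlonglongrightarrow> l"
      using LIMSEQ_subseq_LIMSEQ[OF _ r2(1)] by (auto simp: o_def)
    then show ?case unfolding r_def by (auto simp: convergent_def)
  qed
  have cR: "AE x in M. convergent (\<lambda>n. R (r n) x)" using r2(2) unfolding r_def by simp
  have intbound: "(\<integral>\<^sup>+w. ennreal (P (L k) (NN k) w) \<partial>M) \<le> ennreal B \<and>
                  (\<integral>\<^sup>+w. ennreal (Q (L k) (NN k) w) \<partial>M) \<le> ennreal B" for k
  proof -
    define V where "V w = (\<Sum>m<NN k. L k m * \<bar>f m w\<bar>)" for w
    have Vint: "integrable M V" unfolding V_def using f by auto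
    have "(\<integral>w. V w \<partial>M) = (\<Sum>m<NN k. L k m * L1norm M (f m))"
      unfolding V_def L1norm_def using f by (simp add: Bochner_Integration.integral_sum integrable_abs)
    also have "\<dots> \<le> (\<Sum>m<NN k. L k m * B)"
      using Lnn[of k] B by (intro sum_mono mult_left_mono) auto
    also have "\<dots> = B" using LN[of k] unfolding cc_def by (simp add: sum_distrib_right[symmetric])
    finally have VB: "(\<integral>w. V w \<partial>M) \<le> B" .
    have V0: "0 \<le> V w" for w unfolding V_def using Lnn[of k] by (auto intro: sum_nonneg)
    have nV: "(\<integral>\<^sup>+w. ennreal (V w) \<partial>M) \<le> ennreal B"
      using nn_integral_eq_integral[OF Vint] V0 VB by (simp add: ennreal_leI)
    have PV: "P (L k) (NN k) w \<le> V w" for w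
      unfolding P_def V_def p_def using Lnn[of k] by (intro sum_mono mult_left_mono) auto
    have QV: "Q (L k) (NN k) w \<le> V w" for w
      unfolding Q_def V_def q_def using Lnn[of k] by (intro sum_mono mult_left_mono) auto
    have "(\<integral>\<^sup>+w. ennreal (P (L k) (NN k) w) \<partial>M) \<le> (\<integral>\<^sup>+w. ennreal (V w) \<partial>M)"
      using PV by (intro nn_integral_mono) (simp add: ennreal_leI)
    moreover have "(\<integral>\<^sup>+w. ennreal (Q (L k) (NN k) w) \<partial>M) \<le> (\<integral>\<^sup>+w. ennreal (V w) \<partial>M)"
      using QV by (intro nn_integral_mono) (simp add: ennreal_leI)
    ultimately show ?thesis using nV by (meson order_trans)
  qed
  have liP: "AE w in M. liminf (\<lambda>n. ennreal (P (L (r n)) (NN (r n)) w)) \<noteq> \<infinity>"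
  proof (rule nn_integral_PInf_AE)
    show "(\<lambda>w. liminf (\<lambda>n. ennreal (P (L (r n)) (NN (r n)) w))) \<in> borel_measurable M" by measurable
    have "(\<integral>\<^sup>+w. liminf (\<lambda>n. ennreal (P (L (r n)) (NN (r n)) w)) \<partial>M)
       \<le> liminf (\<lambda>n. \<integral>\<^sup>+w. ennreal (P (L (r n)) (NN (r n)) w) \<partial>M)"
      by (intro nn_integral_liminf) measurable
    also have "\<dots> \<le> liminf (\<lambda>n. ennreal B)"
      using intbound by (intro Liminf_mono always_eventually) auto
    also have "\<dots> = ennreal B" by (simp add: Liminf_const)
    finally show "(\<integral>\<^sup>+w. liminf (\<lambda>n. ennreal (P (L (r n)) (NN (r n)) w)) \<partial>M) \<noteq> \<infinity>"
      using neq_top_trans[OF ennreal_neq_top[of B]] by simp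
  qed
  have liQ: "AE w in M. liminf (\<lambda>n. ennreal (Q (L (r n)) (NN (r n)) w)) \<noteq> \<infinity>"
  proof (rule nn_integral_PInf_AE)
    show "(\<lambda>w. liminf (\<lambda>n. ennreal (Q (L (r n)) (NN (r n)) w))) \<in> borel_measurable M" by measurable
    have "(\<integral>\<^sup>+w. liminf (\<lambda>n. ennreal (Q (L (r n)) (NN (r n)) w)) \<partial>M)
       \<le> liminf (\<lambda>n. \<integral>\<^sup>+w. ennreal (Q (L (r n)) (NN (r n)) w) \<partial>M)"
      by (intro nn_integral_liminf) measurable
    also have "\<dots> \<le> liminf (\<lambda>n. ennreal B)"
      using intbound by (intro Liminf_mono always_eventually) auto
    also have "\<dots> = ennreal B" by (simp add: Liminf_const)
    finally show "(\<integral>\<^sup>+w. liminf (\<lambda>n. ennreal (Q (L (r n)) (NN (r n)) w)) \<partial>M) \<noteq> \<infinity>"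
      using neq_top_trans[OF ennreal_neq_top[of B]] by simp
  qed
  have combPQ: "comb f lam N w = P lam N w - Q lam N w" for lam N w
  proof -
    have "f m w = p m w - q m w" for m unfolding p_def q_def by auto
    then show ?thesis unfolding comb_def P_def Q_def by (simp add: sum_subtractf[symmetric] right_diff_distrib)
  qed
  have conv: "AE w in M. convergent (\<lambda>n. comb f (L (r n)) (NN (r n)) w)"
    using cG cR liP liQ
  proof eventually_elim
    case (elim w)
    have cp: "convergent (\<lambda>n. P (L (r n)) (NN (r n)) w)"
    proof (rule conv_from_exp)
      show "0 \<le> P (L (r n)) (NN (r n)) w" for n by (rule P0[OF Lnn])
      show "convergent (\<lambda>n. exp (- (P (L (r n)) (NN (r n)) w / 2)))" using elim(1) unfolding G_def .
      show "liminf (\<lambda>n. ennreal (P (L (r n)) (NN (r n)) w)) \<noteq> \<infinity>" using elim(3) .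
    qed
    have cq: "convergent (\<lambda>n. Q (L (r n)) (NN (r n)) w)"
    proof (rule conv_from_exp)
      show "0 \<le> Q (L (r n)) (NN (r n)) w" for n by (rule Q0[OF Lnn])
      show "convergent (\<lambda>n. exp (- (Q (L (r n)) (NN (r n)) w / 2)))" using elim(2) unfolding R_def .
      show "liminf (\<lambda>n. ennreal (Q (L (r n)) (NN (r n)) w)) \<noteq> \<infinity>" using elim(4) .
    qed
    show ?case unfolding combPQ using convergent_diff[OF cp cq] by simp
  qed
  define g where "g w = lim (\<lambda>n. comb f (L (r n)) (NN (r n)) w)" for w
  have combm[measurable]: "comb f lam N \<in> borel_measurable M" for lam N unfolding comb_def by measurable
  have gm: "g \<in> borel_measurable M" unfolding g_def by measurable
  have "AE w in M. (\<lambda>n. comb f (L (r n)) (NN (r n)) w) \<longlonglongrightarrow> g w"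
    using conv by eventually_elim (simp add: g_def convergent_LIMSEQ_iff)
  moreover have "\<forall>n. cc n (L (r n)) (NN (r n))"
  proof
    fix n show "cc n (L (r n)) (NN (r n))" by (rule cc_mono[OF LN[of "r n"] rge[of n]])
  qed
  ultimately show ?thesis using gm
    by (intro exI[of _ "\<lambda>n. L (r n)"] exI[of _ "\<lambda>n. NN (r n)"] exI[of _ g]) simp
qed

locale fp =
  fixes M :: "'a measure" and C :: "('a \<Rightarrow> real) set"
    and T :: "('a \<Rightarrow> real) \<Rightarrow> ('a \<Rightarrow> real)"
  assumes sf: "sigma_finite_measure M"
    and sub: "L1_subset M C" and ne: "C \<noteq> {}"
    and cl: "L1_closed M C" and cv: "L1_convex C" and bd: "L1_bounded M C"
    and TC: "\<forall>x\<in>C. T x \<in> C"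
    and af: "L1_affine M C T" and lp: "L1_lipschitzian M C T"
begin

lemma C_int: "x \<in> C \<Longrightarrow> integrable M x"
  using sub unfolding L1_subset_def by auto

lemma TC': "x \<in> C \<Longrightarrow> T x \<in> C" using TC by auto

lemma int_diffC: "x \<in> C \<Longrightarrow> y \<in> C \<Longrightarrow> integrable M (\<lambda>w. x w - y w)"
  using C_int by (intro Bochner_Integration.integrable_diff) auto

lemma C_meas: "x \<in> C \<Longrightarrow> x \<in> borel_measurable M"
  using C_int by auto

lemma Bex: "\<exists>B\<ge>0. \<forall>x\<in>C. L1norm M x \<le> B"
proof -
  obtain B where "\<forall>x\<in>C. L1norm M x \<le> B" using bd unfolding L1_bounded_def by auto
  moreover obtain x where "x \<in> C" using ne by auto
  ultimately show ?thesis using L1_nonneg[of M x] by (intro exI[of _ B]) auto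
qed

lemma dist_bound: "\<exists>D\<ge>0. \<forall>x\<in>C. \<forall>y\<in>C. L1norm M (\<lambda>w. x w - y w) \<le> D"
proof -
  obtain B where B: "B \<ge> 0" "\<forall>x\<in>C. L1norm M x \<le> B" using Bex by auto
  have "L1norm M (\<lambda>w. x w - y w) \<le> 2 * B" if "x \<in> C" "y \<in> C" for x y
  proof -
    have "L1norm M (\<lambda>w. x w - y w) = L1norm M (\<lambda>w. x w + (-1) * y w)" by simp
    also have "\<dots> \<le> L1norm M x + L1norm M (\<lambda>w. (-1) * y w)"
      using that by (intro L1_add) (auto simp: C_int)
    also have "\<dots> \<le> 2 * B" using B(2) that by (simp add: L1_scale) (smt (verit))
    finally show ?thesis .
  qed
  then show ?thesis using B by (intro exI[of _ "2*B"]) auto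
qed

lemma Tk_C: "x \<in> C \<Longrightarrow> (T ^^ k) x \<in> C"
  by (induction k) (auto simp: TC)

lemma Tk_lip: "\<exists>K\<ge>0. \<forall>x\<in>C. \<forall>y\<in>C. L1norm M (\<lambda>w. (T^^k) x w - (T^^k) y w) \<le> K * L1norm M (\<lambda>w. x w - y w)"
proof (induction k)
  case 0 then show ?case by (intro exI[of _ 1]) auto
next
  case (Suc k)
  obtain K where K: "K \<ge> 0" "\<forall>x\<in>C. \<forall>y\<in>C. L1norm M (\<lambda>w. (T^^k) x w - (T^^k) y w) \<le> K * L1norm M (\<lambda>w. x w - y w)"
    using Suc by auto
  obtain L where L: "\<forall>x\<in>C. \<forall>y\<in>C. L1norm M (\<lambda>w. T x w - T y w) \<le> L * L1norm M (\<lambda>w. x w - y w)"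
    using lp unfolding L1_lipschitzian_def by auto
  have "L1norm M (\<lambda>w. (T^^Suc k) x w - (T^^Suc k) y w) \<le> (max L 0 * K) * L1norm M (\<lambda>w. x w - y w)"
    if "x \<in> C" "y \<in> C" for x y
  proof -
    have "L1norm M (\<lambda>w. (T^^Suc k) x w - (T^^Suc k) y w) \<le> L * L1norm M (\<lambda>w. (T^^k) x w - (T^^k) y w)"
      using L that Tk_C by simp
    also have "\<dots> \<le> max L 0 * L1norm M (\<lambda>w. (T^^k) x w - (T^^k) y w)"
      by (intro mult_right_mono) (auto simp: L1_nonneg)
    also have "\<dots> \<le> max L 0 * (K * L1norm M (\<lambda>w. x w - y w))"
      using K that by (intro mult_left_mono) auto
    finally show ?thesis by simp
  qed
  then show ?case using K by (intro exI[of _ "max L 0 * K"]) auto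
qed

lemma lip_bound:
  assumes "x \<in> C" "y \<in> C"
  shows "L1norm M (\<lambda>w. (T^^k) x w - (T^^k) y w) \<le> lip_const M C (T^^k) * L1norm M (\<lambda>w. x w - y w)"
proof -
  obtain K where K: "K \<ge> 0" "\<forall>x\<in>C. \<forall>y\<in>C. L1norm M (\<lambda>w. (T^^k) x w - (T^^k) y w) \<le> K * L1norm M (\<lambda>w. x w - y w)"
    using Tk_lip by blast
  show ?thesis
  proof (cases "L1norm M (\<lambda>w. x w - y w) = 0")
    case True
    then show ?thesis using K assms L1_nonneg[of M "\<lambda>w. (T^^k) x w - (T^^k) y w"]
      by (metis mult_zero_right order_antisym)
  next
    case False
    then have pos: "L1norm M (\<lambda>w. x w - y w) > 0" using L1_nonneg[of M] by (simp add: order_less_le)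
    let ?S = "{L1norm M (\<lambda>w. (T^^k) x w - (T^^k) y w) / L1norm M (\<lambda>w. x w - y w) | x y.
      x \<in> C \<and> y \<in> C \<and> L1norm M (\<lambda>w. x w - y w) \<noteq> 0}"
    have "bdd_above ?S"
    proof (rule bdd_aboveI[of _ K])
      fix r assume "r \<in> ?S"
      then obtain x y where xy: "x \<in> C" "y \<in> C" "L1norm M (\<lambda>w. x w - y w) \<noteq> 0"
        "r = L1norm M (\<lambda>w. (T^^k) x w - (T^^k) y w) / L1norm M (\<lambda>w. x w - y w)" by blast
      have "L1norm M (\<lambda>w. x w - y w) > 0" using xy(3) L1_nonneg[of M] by (simp add: order_less_le)
      then show "r \<le> K" using K xy by (simp add: divide_le_eq)
    qed
    moreover have "L1norm M (\<lambda>w. (T^^k) x w - (T^^k) y w) / L1norm M (\<lambda>w. x w - y w) \<in> ?S"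
      using assms False by blast
    ultimately have "L1norm M (\<lambda>w. (T^^k) x w - (T^^k) y w) / L1norm M (\<lambda>w. x w - y w) \<le> lip_const M C (T^^k)"
      unfolding lip_const_def by (rule cSup_upper[rotated])
    then show ?thesis using pos by (simp add: divide_le_eq)
  qed
qed

lemma lip_nonneg:
  assumes "x \<in> C" "y \<in> C" "L1norm M (\<lambda>w. x w - y w) \<noteq> 0"
  shows "0 \<le> lip_const M C (T^^k)"
proof -
  have "0 \<le> L1norm M (\<lambda>w. (T^^k) x w - (T^^k) y w)" by (rule L1_nonneg)
  also have "\<dots> \<le> lip_const M C (T^^k) * L1norm M (\<lambda>w. x w - y w)" by (rule lip_bound[OF assms(1,2)])
  finally show ?thesis using assms(3) L1_nonneg[of M "\<lambda>w. x w - y w"]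
    by (simp add: zero_le_mult_iff)
qed


lemma comb_C: "(\<And>m. u m \<in> C) \<Longrightarrow> \<forall>m. 0 \<le> lam m \<Longrightarrow> (\<Sum>m<N. lam m) = 1 \<Longrightarrow> comb u lam N \<in> C"
  using comb_ind[OF cv af, of u lam N] by blast

lemma comb_approx:
  assumes u: "\<And>m. u m \<in> C" and l: "\<forall>m. 0 \<le> lam m" "(\<Sum>m<N. lam m) = 1"
  shows "L1norm M (\<lambda>w. T (comb u lam N) w - comb u lam N w)
     \<le> (\<Sum>m<N. lam m * L1norm M (\<lambda>w. T (u m) w - u m w))"
proof -
  have cC: "comb u lam N \<in> C" using comb_C u l by blast
  have ae: "AE w in M. T (comb u lam N) w = (\<Sum>m<N. lam m * T (u m) w)"
    using comb_ind[OF cv af, of u lam N] u l by blast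
  have "AE w in M. T (comb u lam N) w - comb u lam N w = (\<Sum>m<N. lam m * (T (u m) w - u m w))"
    using ae by eventually_elim (simp add: comb_def right_diff_distrib sum_subtractf)
  moreover have "integrable M (\<lambda>w. \<Sum>m<N. lam m * (T (u m) w - u m w))"
  proof -
    have "integrable M (\<lambda>w. T (u m) w - u m w)" for m using u TC C_int by blast
    then show ?thesis by (auto intro!: integrable_sum integrable_mult_right)
  qed
  moreover have "integrable M (\<lambda>w. T (comb u lam N) w - comb u lam N w)"
    using cC TC' by (intro int_diffC) auto
  ultimately have "L1norm M (\<lambda>w. T (comb u lam N) w - comb u lam N w)
     = L1norm M (\<lambda>w. \<Sum>m<N. lam m * (T (u m) w - u m w))"
    by (intro L1_AE_cong) auto
  also have "\<dots> \<le> (\<Sum>m<N. \<bar>lam m\<bar> * L1norm M (\<lambda>w. T (u m) w - u m w))"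
    using L1_wsum[of "{..<N}" M "\<lambda>m w. T (u m) w - u m w" lam] u TC C_int by auto
  finally show ?thesis using l by simp
qed

definition ces :: "('a \<Rightarrow> real) \<Rightarrow> nat \<Rightarrow> 'a \<Rightarrow> real" where
  "ces c m = comb (\<lambda>j. (T^^j) c) (\<lambda>j. if 1 \<le> j then 1 / real m else 0) (Suc m)"

lemma ces_w:
  assumes "m \<ge> 1"
  shows "\<forall>j. 0 \<le> (if 1 \<le> j then 1 / real m else 0)"
    "(\<Sum>j<Suc m. (if 1 \<le> j then 1 / real m else 0)) = 1"
proof -
  show "\<forall>j. 0 \<le> (if 1 \<le> j then 1 / real m else 0)" by auto
  have "(\<Sum>j=1..m. 1 / real m) = real m * (1 / real m)" by simp
  then show "(\<Sum>j<Suc m. (if 1 \<le> j then 1 / real m else 0)) = 1"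
    using assms by (simp only: sum_if_Suc) simp
qed

lemma ces_C: "c \<in> C \<Longrightarrow> m \<ge> 1 \<Longrightarrow> ces c m \<in> C"
  unfolding ces_def using ces_w Tk_C by (intro comb_C) auto

lemma ces_approx:
  assumes c: "c \<in> C" and m: "m \<ge> 1" and D: "\<forall>x\<in>C. \<forall>y\<in>C. L1norm M (\<lambda>w. x w - y w) \<le> D"
  shows "L1norm M (\<lambda>w. T (ces c m) w - ces c m w) \<le> D / real m"
proof -
  let ?lam = "\<lambda>j. if 1 \<le> j then 1 / real m else 0"
  let ?u = "\<lambda>j. (T^^j) c"
  have u: "\<And>j. ?u j \<in> C" using Tk_C c by auto
  have cC: "ces c m \<in> C" using ces_C c m by auto
  have ae: "AE w in M. T (ces c m) w = (\<Sum>j<Suc m. ?lam j * T (?u j) w)"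
    unfolding ces_def using comb_ind[OF cv af, of ?u ?lam "Suc m"] u ces_w(1)[OF m] ces_w(2)[OF m] by blast
  have "AE w in M. T (ces c m) w - ces c m w = (1 / real m) * ((T^^Suc m) c w - (T^^1) c w)"
    using ae
  proof eventually_elim
    case (elim w)
    have "T (ces c m) w - ces c m w = (\<Sum>j<Suc m. ?lam j * ((T^^Suc j) c w - (T^^j) c w))"
      using elim by (simp add: ces_def comb_def right_diff_distrib sum_subtractf)
    also have "\<dots> = (\<Sum>j<Suc m. (if 1 \<le> j then (1 / real m) * ((T^^Suc j) c w - (T^^j) c w) else 0))"
      by (intro sum.cong) auto
    also have "\<dots> = (\<Sum>j=1..m. (1 / real m) * ((T^^Suc j) c w - (T^^j) c w))"
      by (rule sum_if_Suc)
    also have "\<dots> = (1 / real m) * (\<Sum>j=1..m. ((T^^Suc j) c w - (T^^j) c w))"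
      by (simp add: sum_distrib_left)
    also have "\<dots> = (1 / real m) * ((T^^Suc m) c w - (T^^1) c w)"
      using m by (subst sum_Suc_diff) auto
    finally show ?case .
  qed
  moreover have "integrable M (\<lambda>w. (1 / real m) * ((T^^Suc m) c w - (T^^1) c w))"
  proof -
    have a: "integrable M ((T^^Suc m) c)" "integrable M ((T^^1) c)" using u C_int by blast+
    show ?thesis by (rule integrable_mult_right) (rule Bochner_Integration.integrable_diff[OF a])
  qed
  moreover have "integrable M (\<lambda>w. T (ces c m) w - ces c m w)"
    using cC TC' by (intro int_diffC) auto
  ultimately have "L1norm M (\<lambda>w. T (ces c m) w - ces c m w)
     = L1norm M (\<lambda>w. (1 / real m) * ((T^^Suc m) c w - (T^^1) c w))"
    by (intro L1_AE_cong) auto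
  also have "\<dots> = (1 / real m) * L1norm M (\<lambda>w. (T^^Suc m) c w - (T^^1) c w)"
    by (rule trans[OF L1_scale]) simp
  also have "\<dots> \<le> (1 / real m) * D"
    using D u[of "Suc m"] u[of 1] by (intro mult_left_mono) auto
  finally show ?thesis by simp
qed

lemma ces_dist:
  assumes c: "c \<in> C" and m: "m \<ge> 1" and y: "integrable M y"
  shows "L1norm M (\<lambda>w. ces c m w - y w) \<le> (1 / real m) * (\<Sum>j=1..m. L1norm M (\<lambda>w. (T^^j) c w - y w))"
proof -
  let ?lam = "\<lambda>j. if 1 \<le> j then 1 / real m else 0"
  have "L1norm M (\<lambda>w. ces c m w - y w) \<le> (\<Sum>j<Suc m. ?lam j * L1norm M (\<lambda>w. (T^^j) c w - y w))"
    unfolding ces_def using Tk_C c C_int y ces_w[OF m] by (intro comb_dist) auto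
  also have "\<dots> = (\<Sum>j<Suc m. (if 1 \<le> j then (1 / real m) * L1norm M (\<lambda>w. (T^^j) c w - y w) else 0))"
    by (intro sum.cong) auto
  also have "\<dots> = (\<Sum>j=1..m. (1 / real m) * L1norm M (\<lambda>w. (T^^j) c w - y w))"
    by (rule sum_if_Suc)
  finally show ?thesis by (simp add: sum_distrib_left)
qed

lemma Tk_approx: "\<exists>K\<ge>0. \<forall>y\<in>C. L1norm M (\<lambda>w. (T^^j) y w - y w) \<le> K * L1norm M (\<lambda>w. T y w - y w)"
proof (induction j)
  case 0 then show ?case by (intro exI[of _ 0]) (simp add: L1norm_def)
next
  case (Suc j)
  obtain K where K: "K \<ge> 0" "\<forall>y\<in>C. L1norm M (\<lambda>w. (T^^j) y w - y w) \<le> K * L1norm M (\<lambda>w. T y w - y w)"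
    using Suc by auto
  obtain K' where K': "K' \<ge> 0" "\<forall>x\<in>C. \<forall>y\<in>C. L1norm M (\<lambda>w. (T^^j) x w - (T^^j) y w) \<le> K' * L1norm M (\<lambda>w. x w - y w)"
    using Tk_lip by blast
  have "L1norm M (\<lambda>w. (T^^Suc j) y w - y w) \<le> (K' + K) * L1norm M (\<lambda>w. T y w - y w)" if y: "y \<in> C" for y
  proof -
    have e: "(T^^Suc j) y = (T^^j) (T y)" by (simp add: funpow_swap1)
    have "L1norm M (\<lambda>w. (T^^Suc j) y w - y w) \<le> L1norm M (\<lambda>w. (T^^j) (T y) w - (T^^j) y w) + L1norm M (\<lambda>w. (T^^j) y w - y w)"
      unfolding e using y TC Tk_C C_int by (intro L1_tri) auto
    also have "\<dots> \<le> K' * L1norm M (\<lambda>w. T y w - y w) + K * L1norm M (\<lambda>w. T y w - y w)"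
      using K K' y TC by (intro add_mono) auto
    finally show ?thesis by (simp add: algebra_simps)
  qed
  then show ?case using K K' by (intro exI[of _ "K' + K"]) auto
qed


lemma Tlip: "\<exists>K\<ge>0. \<forall>x\<in>C. \<forall>y\<in>C. L1norm M (\<lambda>w. T x w - T y w) \<le> K * L1norm M (\<lambda>w. x w - y w)"
  using Tk_lip[of 1] by simp

lemma limfix:
  assumes y: "\<And>j. y j \<in> C" and z: "integrable M z"
    and yz: "(\<lambda>j. L1norm M (\<lambda>w. y j w - z w)) \<longlonglongrightarrow> 0"
    and ya: "(\<lambda>j. L1norm M (\<lambda>w. T (y j) w - y j w)) \<longlonglongrightarrow> 0"
  shows "z \<in> C \<and> (AE w in M. T z w = z w)"
proof -
  have zC: "z \<in> C" using cl y z yz unfolding L1_closed_def by blast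
  obtain K where K: "K \<ge> 0" "\<forall>x\<in>C. \<forall>y\<in>C. L1norm M (\<lambda>w. T x w - T y w) \<le> K * L1norm M (\<lambda>w. x w - y w)"
    using Tlip by blast
  have bnd: "L1norm M (\<lambda>w. T z w - z w) \<le> K * L1norm M (\<lambda>w. y j w - z w) + L1norm M (\<lambda>w. T (y j) w - y j w) + L1norm M (\<lambda>w. y j w - z w)" for j
  proof -
    have "L1norm M (\<lambda>w. T z w - z w) \<le> L1norm M (\<lambda>w. T z w - T (y j) w) + L1norm M (\<lambda>w. T (y j) w - z w)"
      using zC y TC C_int by (intro L1_tri) auto
    also have "L1norm M (\<lambda>w. T (y j) w - z w) \<le> L1norm M (\<lambda>w. T (y j) w - y j w) + L1norm M (\<lambda>w. y j w - z w)"
      using zC y TC C_int by (intro L1_tri) auto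
    also have "L1norm M (\<lambda>w. T z w - T (y j) w) \<le> K * L1norm M (\<lambda>w. z w - y j w)"
      using K zC y by auto
    also have "L1norm M (\<lambda>w. z w - y j w) = L1norm M (\<lambda>w. y j w - z w)" by (rule L1_minus)
    finally show ?thesis by simp
  qed
  have "(\<lambda>j. K * L1norm M (\<lambda>w. y j w - z w) + L1norm M (\<lambda>w. T (y j) w - y j w) + L1norm M (\<lambda>w. y j w - z w))
     \<longlonglongrightarrow> K * 0 + 0 + 0"
    using yz ya by (intro tendsto_intros)
  then have "L1norm M (\<lambda>w. T z w - z w) \<le> 0"
    using bnd by (intro LIMSEQ_le_const) auto
  then have "L1norm M (\<lambda>w. T z w - z w) = 0" using L1_nonneg[of M] by (simp add: order_antisym)
  then have "AE w in M. T z w - z w = 0" using zC TC by (intro L1_zero_AE int_diffC) auto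
  then show ?thesis using zC by auto
qed

definition good :: "(nat \<Rightarrow> 'a \<Rightarrow> real) \<Rightarrow> ('a \<Rightarrow> real) \<Rightarrow> real \<Rightarrow> bool" where
  "good xs x R \<longleftrightarrow> (\<forall>n. xs n \<in> C) \<and> integrable M x \<and> (AE w in M. (\<lambda>n. xs n w) \<longlonglongrightarrow> x w) \<and>
     (\<lambda>n. L1norm M (\<lambda>w. xs n w - x w)) \<longlonglongrightarrow> R \<and> (\<lambda>n. L1norm M (\<lambda>w. T (xs n) w - xs n w)) \<longlonglongrightarrow> 0"

lemma good_R0: "good xs x R \<Longrightarrow> 0 \<le> R"
proof -
  assume "good xs x R"
  then have l: "(\<lambda>n. L1norm M (\<lambda>w. xs n w - x w)) \<longlonglongrightarrow> R" unfolding good_def by blast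
  show "0 \<le> R" by (rule LIMSEQ_le_const[OF l]) (intro exI allI impI L1_nonneg)
qed

lemma good_dist:
  assumes g: "good xs x R" and c: "integrable M c"
  shows "(\<lambda>n. L1norm M (\<lambda>w. xs n w - c w)) \<longlonglongrightarrow> L1norm M (\<lambda>w. x w - c w) + R"
proof -
  have xs: "\<And>n. integrable M (xs n)" "integrable M x" "AE w in M. (\<lambda>n. xs n w) \<longlonglongrightarrow> x w"
    "(\<lambda>n. L1norm M (\<lambda>w. xs n w - x w)) \<longlonglongrightarrow> R"
    using g C_int unfolding good_def by auto
  have "(\<lambda>n. L1norm M (\<lambda>w. (x w - c w) + (xs n w - x w)) - L1norm M (\<lambda>w. xs n w - x w)) \<longlonglongrightarrow> L1norm M (\<lambda>w. x w - c w)"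
    using xs c by (intro BL) auto
  then have "(\<lambda>n. (L1norm M (\<lambda>w. (x w - c w) + (xs n w - x w)) - L1norm M (\<lambda>w. xs n w - x w)) + L1norm M (\<lambda>w. xs n w - x w))
     \<longlonglongrightarrow> L1norm M (\<lambda>w. x w - c w) + R"
    using xs(4) by (intro tendsto_add)
  moreover have "(\<lambda>w. (x w - c w) + (xs n w - x w)) = (\<lambda>w. xs n w - c w)" for n by auto
  ultimately show ?thesis by simp
qed

lemma good_Tk:
  assumes g: "good xs x R"
  shows "(\<lambda>n. L1norm M (\<lambda>w. (T^^j) (xs n) w - xs n w)) \<longlonglongrightarrow> 0"
proof -
  obtain K where K: "K \<ge> 0" "\<forall>y\<in>C. L1norm M (\<lambda>w. (T^^j) y w - y w) \<le> K * L1norm M (\<lambda>w. T y w - y w)"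
    using Tk_approx by blast
  have "(\<lambda>n. K * L1norm M (\<lambda>w. T (xs n) w - xs n w)) \<longlonglongrightarrow> K * 0"
    using g unfolding good_def by (intro tendsto_intros) auto
  then have l: "(\<lambda>n. K * L1norm M (\<lambda>w. T (xs n) w - xs n w)) \<longlonglongrightarrow> 0" by simp
  show ?thesis
  proof (rule tendsto_sandwich[OF _ _ tendsto_const l])
    show "eventually (\<lambda>n. 0 \<le> L1norm M (\<lambda>w. (T^^j) (xs n) w - xs n w)) sequentially"
      by (intro always_eventually allI) (rule L1_nonneg)
    have "xs n \<in> C" for n using g unfolding good_def by blast
    then show "eventually (\<lambda>n. L1norm M (\<lambda>w. (T^^j) (xs n) w - xs n w) \<le> K * L1norm M (\<lambda>w. T (xs n) w - xs n w)) sequentially"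
      using K by (intro always_eventually allI) blast
  qed
qed

lemma good_from:
  assumes v: "\<And>k. v k \<in> C" and E: "\<And>k. L1norm M (\<lambda>w. T (v k) w - v k w) \<le> E / real (Suc k)"
    and x: "integrable M x" and rho: "\<And>k. L1norm M (\<lambda>w. v k w - x w) \<le> \<rho>"
  shows "\<exists>xs y R. good xs y R \<and> L1norm M (\<lambda>w. y w - x w) + R \<le> \<rho>"
proof -
  obtain Bd where Bd: "Bd \<ge> 0" "\<forall>x\<in>C. L1norm M x \<le> Bd" using Bex by auto
  have E0: "0 \<le> E" using E[of 0] L1_nonneg[of M "\<lambda>w. T (v 0) w - v 0 w"] by simp
  obtain lam N g where lN: "\<forall>k. cc k (lam k) (N k)" and gm: "g \<in> borel_measurable M"
    and gl: "AE w in M. (\<lambda>k. comb v (lam k) (N k) w) \<longlonglongrightarrow> g w"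
    using convex_ae[OF sf, of v Bd] v C_int Bd by blast
  define u where "u k = comb v (lam k) (N k)" for k
  have lnn: "\<forall>m. 0 \<le> lam k m" and l1: "(\<Sum>m<N k. lam k m) = 1" for k using lN unfolding cc_def by auto
  have uC: "u k \<in> C" for k unfolding u_def using v lnn l1 by (intro comb_C) auto
  have ux: "L1norm M (\<lambda>w. u k w - x w) \<le> \<rho>" for k
  proof -
    have "L1norm M (\<lambda>w. u k w - x w) \<le> (\<Sum>m<N k. lam k m * L1norm M (\<lambda>w. v m w - x w))"
      unfolding u_def using v C_int x lnn l1 by (intro comb_dist) auto
    also have "\<dots> \<le> (\<Sum>m<N k. lam k m * \<rho>)" using rho lnn by (intro sum_mono mult_left_mono) auto
    also have "\<dots> = \<rho>" using l1 by (simp add: sum_distrib_right[symmetric])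
    finally show ?thesis .
  qed
  have uT: "L1norm M (\<lambda>w. T (u k) w - u k w) \<le> E / real (Suc k)" for k
  proof -
    have "L1norm M (\<lambda>w. T (u k) w - u k w) \<le> (\<Sum>m<N k. lam k m * L1norm M (\<lambda>w. T (v m) w - v m w))"
      unfolding u_def using v lnn l1 by (intro comb_approx) auto
    also have "\<dots> \<le> (\<Sum>m<N k. lam k m * (E / real (Suc k)))"
    proof (intro sum_mono)
      fix m
      show "lam k m * L1norm M (\<lambda>w. T (v m) w - v m w) \<le> lam k m * (E / real (Suc k))"
      proof (cases "m < k")
        case True
        then have "lam k m = 0" using lN unfolding cc_def by auto
        then show ?thesis by simp
      next
        case False
        have "L1norm M (\<lambda>w. T (v m) w - v m w) \<le> E / real (Suc m)" by (rule E)
        also have "\<dots> \<le> E / real (Suc k)" using False E0 by (intro divide_left_mono) auto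
        finally show ?thesis using lnn by (intro mult_left_mono) auto
      qed
    qed
    also have "\<dots> = E / real (Suc k)" by (subst sum_distrib_right[symmetric]) (simp add: l1)
    finally show ?thesis .
  qed
  have uint: "integrable M (u k)" for k using uC C_int by auto
  have ub: "L1norm M (u k) \<le> Bd" for k using uC Bd by auto
  have gi: "integrable M g \<and> L1norm M g \<le> Bd"
    using fatou_L1[OF uint gm _ ub] gl unfolding u_def by auto
  define d where "d k = L1norm M (\<lambda>w. u k w - g w)" for k
  have dB: "\<bar>d k\<bar> \<le> 2 * Bd" for k
  proof -
    have "d k \<le> L1norm M (u k) + L1norm M (\<lambda>w. - g w)"
      unfolding d_def using uint gi by (subst diff_conv_add_uminus) (intro L1_add, auto)
    then show ?thesis using ub[of k] gi L1_nonneg[of M "\<lambda>w. u k w - g w"] unfolding d_def by simp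
  qed
  obtain s where s: "strict_mono s" "monoseq (\<lambda>n. d (s n))" using seq_monosub by blast
  have "Bseq (\<lambda>n. d (s n))" using dB by (intro BseqI'[of _ "2 * Bd"]) auto
  then obtain R where R: "(\<lambda>n. d (s n)) \<longlonglongrightarrow> R"
    using Bseq_monoseq_convergent[OF _ s(2)] by (auto simp: convergent_def)
  define xs where "xs n = u (s n)" for n
  have sge: "n \<le> s n" for n using seq_suble[OF s(1)] by blast
  have gd: "good xs g R"
    unfolding good_def
  proof (intro conjI allI)
    show "xs n \<in> C" for n unfolding xs_def by (rule uC)
    show "integrable M g" using gi by simp
    show "AE w in M. (\<lambda>n. xs n w) \<longlonglongrightarrow> g w"
      using gl
    proof eventually_elim
      case (elim w)
      have "((\<lambda>k. comb v (lam k) (N k) w) \<circ> s) \<longlonglongrightarrow> g w" by (rule LIMSEQ_subseq_LIMSEQ[OF elim s(1)])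
      then show ?case unfolding xs_def u_def comp_def .
    qed
    show "(\<lambda>n. L1norm M (\<lambda>w. xs n w - g w)) \<longlonglongrightarrow> R" using R unfolding xs_def d_def .
    have "(\<lambda>n. E * inverse (real (Suc n))) \<longlonglongrightarrow> E * 0"
      by (rule tendsto_mult_left[OF LIMSEQ_inverse_real_of_nat])
    then have lim0: "(\<lambda>n. E / real (Suc n)) \<longlonglongrightarrow> 0" by (simp add: divide_inverse)
    have bnd: "L1norm M (\<lambda>w. T (xs n) w - xs n w) \<le> E / real (Suc n)" for n
    proof -
      have "L1norm M (\<lambda>w. T (xs n) w - xs n w) \<le> E / real (Suc (s n))" unfolding xs_def by (rule uT)
      also have "\<dots> \<le> E / real (Suc n)" using sge[of n] E0 by (intro divide_left_mono) auto
      finally show ?thesis .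
    qed
    show "(\<lambda>n. L1norm M (\<lambda>w. T (xs n) w - xs n w)) \<longlonglongrightarrow> 0"
    proof (rule tendsto_sandwich[OF _ _ tendsto_const lim0])
      show "eventually (\<lambda>n. 0 \<le> L1norm M (\<lambda>w. T (xs n) w - xs n w)) sequentially"
        by (intro always_eventually allI) (rule L1_nonneg)
      show "eventually (\<lambda>n. L1norm M (\<lambda>w. T (xs n) w - xs n w) \<le> E / real (Suc n)) sequentially"
        by (intro always_eventually allI) (rule bnd)
    qed
  qed
  have "(\<lambda>n. L1norm M (\<lambda>w. xs n w - x w)) \<longlonglongrightarrow> L1norm M (\<lambda>w. g w - x w) + R"
    by (rule good_dist[OF gd x])
  moreover have "L1norm M (\<lambda>w. xs n w - x w) \<le> \<rho>" for n unfolding xs_def by (rule ux)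
  ultimately have "L1norm M (\<lambda>w. g w - x w) + R \<le> \<rho>" by (intro LIMSEQ_le_const2) (blast, blast)
  then show ?thesis using gd by (intro exI[of _ xs] exI[of _ g] exI[of _ R]) simp
qed


definition tprop :: "real \<Rightarrow> bool" where
  "tprop l \<longleftrightarrow> (\<forall>xs x. (\<forall>n. xs n \<in> C) \<longrightarrow> integrable M x \<longrightarrow>
        (AE w in M. (\<lambda>n. xs n w) \<longlonglongrightarrow> x w) \<longrightarrow>
        (INF c\<in>C. limsup (\<lambda>n. ereal (L1norm M (\<lambda>w. c w - xs n w))))
          \<le> ereal l * limsup (\<lambda>n. ereal (L1norm M (\<lambda>w. x w - xs n w))))"

lemma step:
  assumes l0: "0 \<le> l" and tp: "tprop l" and s0: "0 < s" and sl: "s * l < 2"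
    and freq: "\<forall>N. \<exists>m\<ge>N. 1 \<le> m \<and> (\<Sum>k=1..m. lip_const M C (T^^k)) / real m < s"
    and lnn: "\<forall>k. 0 \<le> lip_const M C (T^^k)"
    and g: "good xs x R" and R0: "0 < R"
  shows "\<exists>xs' x' R'. good xs' x' R' \<and> L1norm M (\<lambda>w. x' w - x w) + R' \<le> (s * l / 2) * R"
proof -
  define \<delta> where "\<delta> = (2 - s * l) / (2 * s)"
  have d0: "0 < \<delta>" unfolding \<delta>_def using s0 sl by auto
  have sld: "s * (l + \<delta>) = s * l / 2 + 1" unfolding \<delta>_def using s0 by (simp add: field_simps)
  have xsC: "\<And>n. xs n \<in> C" and xint: "integrable M x" and ae: "AE w in M. (\<lambda>n. xs n w) \<longlonglongrightarrow> x w"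
    and xR: "(\<lambda>n. L1norm M (\<lambda>w. xs n w - x w)) \<longlonglongrightarrow> R"
    using g unfolding good_def by auto
  have cx: "(\<lambda>n. L1norm M (\<lambda>w. c w - xs n w)) \<longlonglongrightarrow> L1norm M (\<lambda>w. x w - c w) + R" if "integrable M c" for c
    using good_dist[OF g that] by (simp add: L1_minus[of M _ "xs _"])
  have ls1: "limsup (\<lambda>n. ereal (L1norm M (\<lambda>w. c w - xs n w))) = ereal (L1norm M (\<lambda>w. x w - c w) + R)"
    if "c \<in> C" for c
    using cx[OF C_int[OF that]] by (intro lim_imp_Limsup) (auto intro: tendsto_ereal)
  have lsR: "limsup (\<lambda>n. ereal (L1norm M (\<lambda>w. x w - xs n w))) = ereal R"
  proof (intro lim_imp_Limsup)
    show "(\<lambda>n. ereal (L1norm M (\<lambda>w. x w - xs n w))) \<longlonglongrightarrow> ereal R"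
      using xR by (intro tendsto_ereal) (simp add: L1_minus[of M x])
  qed simp
  have "(INF c\<in>C. limsup (\<lambda>n. ereal (L1norm M (\<lambda>w. c w - xs n w)))) \<le> ereal l * limsup (\<lambda>n. ereal (L1norm M (\<lambda>w. x w - xs n w)))"
    using tp[unfolded tprop_def, rule_format, of xs x] xsC xint ae by blast
  then have e0: "(INF c\<in>C. limsup (\<lambda>n. ereal (L1norm M (\<lambda>w. c w - xs n w)))) \<le> ereal l * ereal R"
    by (simp only: lsR)
  have eq: "(INF c\<in>C. limsup (\<lambda>n. ereal (L1norm M (\<lambda>w. c w - xs n w))))
     = (INF c\<in>C. ereal (L1norm M (\<lambda>w. x w - c w) + R))"
    using ls1 by (intro INF_cong) auto
  have e1: "(INF c\<in>C. ereal (L1norm M (\<lambda>w. x w - c w) + R)) \<le> ereal l * ereal R"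
    using e0 unfolding eq .
  have e2: "ereal l * ereal R < ereal (l * R + \<delta> * R)"
  proof -
    have "0 < \<delta> * R" using d0 R0 by simp
    then show ?thesis by simp
  qed
  have "(INF c\<in>C. ereal (L1norm M (\<lambda>w. x w - c w) + R)) < ereal (l * R + \<delta> * R)"
    using e1 e2 by (rule le_less_trans)
  then obtain c where cC: "c \<in> C" and cb: "L1norm M (\<lambda>w. x w - c w) + R < l * R + \<delta> * R"
    unfolding INF_less_iff by auto
  have "\<forall>k. \<exists>m. Suc k \<le> m \<and> 1 \<le> m \<and> (\<Sum>j=1..m. lip_const M C (T^^j)) / real m < s"
    using freq by blast
  from choice[OF this] obtain mk where mk: "\<forall>k. Suc k \<le> mk k \<and> 1 \<le> mk k \<and> (\<Sum>j=1..mk k. lip_const M C (T^^j)) / real (mk k) < s"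
    by (elim exE) (rule that)
  obtain D where D: "D \<ge> 0" "\<forall>x\<in>C. \<forall>y\<in>C. L1norm M (\<lambda>w. x w - y w) \<le> D" using dist_bound by blast
  define v where "v k = ces c (mk k)" for k
  have vC: "v k \<in> C" for k unfolding v_def using mk cC ces_C by auto
  have vT: "L1norm M (\<lambda>w. T (v k) w - v k w) \<le> D / real (Suc k)" for k
  proof -
    have "L1norm M (\<lambda>w. T (v k) w - v k w) \<le> D / real (mk k)"
      unfolding v_def using ces_approx[OF cC _ D(2)] mk by auto
    also have "\<dots> \<le> D / real (Suc k)"
    proof -
      have "Suc k \<le> mk k" using mk by blast
      then have "real (Suc k) \<le> real (mk k)" by linarith
      then show ?thesis using D(1) by (intro divide_left_mono) auto
    qed
    finally show ?thesis .
  qed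
  have vx: "L1norm M (\<lambda>w. v k w - x w) \<le> (s * l / 2) * R" for k
  proof -
    define m where "m = mk k"
    have m1: "1 \<le> m" and avg: "(\<Sum>j=1..m. lip_const M C (T^^j)) / real m < s" using mk unfolding m_def by auto
    define u where "u = ces c m"
    have uC: "u \<in> C" unfolding u_def using ces_C cC m1 by auto
    define X where "X = L1norm M (\<lambda>w. x w - c w) + R"
    have X0: "0 \<le> X" unfolding X_def using R0 L1_nonneg[of M] by (simp add: add_nonneg_nonneg less_imp_le)
    have A: "(\<lambda>n. L1norm M (\<lambda>w. xs n w - u w)) \<longlonglongrightarrow> L1norm M (\<lambda>w. x w - u w) + R"
      by (rule good_dist[OF g C_int[OF uC]])
    have Bd: "L1norm M (\<lambda>w. xs n w - u w) \<le> (1 / real m) * (\<Sum>j=1..m. lip_const M C (T^^j) * L1norm M (\<lambda>w. c w - xs n w) + L1norm M (\<lambda>w. (T^^j) (xs n) w - xs n w))" for n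
    proof -
      have "L1norm M (\<lambda>w. xs n w - u w) = L1norm M (\<lambda>w. u w - xs n w)" by (rule L1_minus)
      also have "\<dots> \<le> (1 / real m) * (\<Sum>j=1..m. L1norm M (\<lambda>w. (T^^j) c w - xs n w))"
        unfolding u_def using cC m1 xsC C_int by (intro ces_dist) auto
      also have "\<dots> \<le> (1 / real m) * (\<Sum>j=1..m. lip_const M C (T^^j) * L1norm M (\<lambda>w. c w - xs n w) + L1norm M (\<lambda>w. (T^^j) (xs n) w - xs n w))"
      proof (intro mult_left_mono sum_mono)
        fix j
        have "L1norm M (\<lambda>w. (T^^j) c w - xs n w) \<le> L1norm M (\<lambda>w. (T^^j) c w - (T^^j) (xs n) w) + L1norm M (\<lambda>w. (T^^j) (xs n) w - xs n w)"
          using cC xsC Tk_C C_int by (intro L1_tri) auto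
        also have "L1norm M (\<lambda>w. (T^^j) c w - (T^^j) (xs n) w) \<le> lip_const M C (T^^j) * L1norm M (\<lambda>w. c w - xs n w)"
          using cC xsC by (intro lip_bound) auto
        finally show "L1norm M (\<lambda>w. (T^^j) c w - xs n w) \<le> lip_const M C (T^^j) * L1norm M (\<lambda>w. c w - xs n w) + L1norm M (\<lambda>w. (T^^j) (xs n) w - xs n w)"
          by simp
      qed simp
      finally show ?thesis .
    qed
    have Cl: "(\<lambda>n. (1 / real m) * (\<Sum>j=1..m. lip_const M C (T^^j) * L1norm M (\<lambda>w. c w - xs n w) + L1norm M (\<lambda>w. (T^^j) (xs n) w - xs n w)))
       \<longlonglongrightarrow> (1 / real m) * (\<Sum>j=1..m. lip_const M C (T^^j) * X + 0)"
    proof -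
      have t1: "(\<lambda>n. lip_const M C (T^^j) * L1norm M (\<lambda>w. c w - xs n w)) \<longlonglongrightarrow> lip_const M C (T^^j) * X" for j
        unfolding X_def by (intro tendsto_mult_left cx C_int cC)
      have t2: "(\<lambda>n. L1norm M (\<lambda>w. (T^^j) (xs n) w - xs n w)) \<longlonglongrightarrow> 0" for j by (rule good_Tk[OF g])
      have "(\<lambda>n. (\<Sum>j=1..m. lip_const M C (T^^j) * L1norm M (\<lambda>w. c w - xs n w) + L1norm M (\<lambda>w. (T^^j) (xs n) w - xs n w)))
       \<longlonglongrightarrow> (\<Sum>j=1..m. lip_const M C (T^^j) * X + 0)"
        by (rule tendsto_sum) (rule tendsto_add[OF t1 t2])
      then show ?thesis by (rule tendsto_mult_left)
    qed
    have "L1norm M (\<lambda>w. x w - u w) + R \<le> (1 / real m) * (\<Sum>j=1..m. lip_const M C (T^^j) * X + 0)"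
      using A Cl Bd by (intro LIMSEQ_le[OF A Cl]) auto
    also have "\<dots> = ((\<Sum>j=1..m. lip_const M C (T^^j)) / real m) * X"
      by (simp add: sum_distrib_right)
    also have "\<dots> \<le> s * X" using avg X0 by (intro mult_right_mono) auto
    also have "\<dots> \<le> s * (l * R + \<delta> * R)" using cb s0 unfolding X_def by (intro mult_left_mono) auto
    also have "\<dots> = (s * (l + \<delta>)) * R" by (simp add: algebra_simps)
    also have "\<dots> = (s * l / 2 + 1) * R" by (simp only: sld)
    finally have "L1norm M (\<lambda>w. x w - u w) \<le> (s * l / 2) * R" by (simp add: algebra_simps)
    moreover have "L1norm M (\<lambda>w. v k w - x w) = L1norm M (\<lambda>w. x w - u w)"
      unfolding v_def u_def m_def by (rule L1_minus)
    ultimately show ?thesis by simp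
  qed
  show ?thesis using good_from[OF vC vT xint vx] by blast
qed


lemma params:
  assumes hyp: "S_const M C T < 2 / t_const M C"
    and lnn: "\<forall>k. 0 \<le> lip_const M C (T^^k)"
  shows "\<exists>s l. 0 < s \<and> 0 \<le> l \<and> tprop l \<and> s * l < 2 \<and>
     (\<forall>N. \<exists>m\<ge>N. 1 \<le> m \<and> (\<Sum>k=1..m. lip_const M C (T^^k)) / real m < s)"
proof -
  define av where "av n = (\<Sum>k=1..n. lip_const M C (T^^k)) / real n" for n
  have av0: "0 \<le> av n" for n
  proof -
    have "0 \<le> (\<Sum>k=1..n. lip_const M C (T^^k))" using lnn by (intro sum_nonneg) auto
    then show ?thesis unfolding av_def by simp
  qed
  have Sdef: "S_const M C T = liminf (\<lambda>n. ereal (av n))" unfolding S_const_def av_def ..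
  have S0: "0 \<le> S_const M C T" unfolding Sdef using av0 by (intro Liminf_bounded always_eventually) auto
  have tdef: "t_const M C = Inf {ereal l | l. l \<ge> 0 \<and> tprop l}" unfolding t_const_def tprop_def ..
  have t0: "0 \<le> t_const M C" unfolding tdef by (intro Inf_greatest) auto
  obtain s where s0: "0 < s" and Ss: "S_const M C T < ereal s" and ts: "t_const M C < ereal (2 / s)"
  proof (cases "t_const M C")
    case (real t')
    have t'0: "0 \<le> t'" using t0 real by simp
    have Sfin: "S_const M C T \<noteq> \<infinity>" using hyp by auto
    obtain S' where S': "S_const M C T = ereal S'" using Sfin S0 by (cases "S_const M C T") auto
    have S'0: "0 \<le> S'" using S0 S' by simp
    show thesis
    proof (cases "t' = 0")
      case True
      show thesis
      proof (rule that[of "S' + 1"])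
        show "0 < S' + 1" using S'0 by simp
        show "S_const M C T < ereal (S' + 1)" using S' by simp
        have "0 < 2 / (S' + 1)" using S'0 by simp
        then show "t_const M C < ereal (2 / (S' + 1))" using real True by simp
      qed
    next
      case False
      then have tp: "0 < t'" using t'0 by simp
      have "S_const M C T < ereal (2 / t')" using hyp real tp by (simp add: ereal_divide)
      then have St: "S' < 2 / t'" using S' by simp
      define s where "s = (S' + 2 / t') / 2"
      have sp: "0 < s" unfolding s_def using S'0 tp by (simp add: add_nonneg_pos)
      show thesis
      proof (rule that[of s])
        show "0 < s" by (rule sp)
        show "S_const M C T < ereal s" using S' St unfolding s_def by simp
        have "s < 2 / t'" using St unfolding s_def by simp
        then have "s * t' < 2" using tp by (simp add: pos_less_divide_eq)
        then have "t' < 2 / s" using sp by (simp add: pos_less_divide_eq mult.commute)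
        then show "t_const M C < ereal (2 / s)" using real by simp
      qed
    qed
  next
    case PInf
    then have "S_const M C T < 0" using hyp by simp
    then show thesis using S0 by simp
  next
    case MInf
    then show thesis using t0 by simp
  qed
  have "Inf {ereal l | l. l \<ge> 0 \<and> tprop l} < ereal (2 / s)" using ts tdef by simp
  then obtain y where "y \<in> {ereal l | l. l \<ge> 0 \<and> tprop l}" "y < ereal (2 / s)"
    unfolding Inf_less_iff by blast
  then obtain l where l0: "0 \<le> l" and tpl: "tprop l" and ls: "l < 2 / s" by auto
  have sl: "s * l < 2" using ls s0 by (simp add: pos_less_divide_eq mult.commute)
  have "\<not> (ereal s \<le> liminf (\<lambda>n. ereal (av n)))" using Ss Sdef by simp
  then obtain y where y: "y < ereal s" "\<not> eventually (\<lambda>n. y < ereal (av n)) sequentially"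
    unfolding le_Liminf_iff by auto
  have fr: "frequently (\<lambda>n. av n < s) sequentially"
  proof -
    have "frequently (\<lambda>n. ereal (av n) \<le> y) sequentially"
      using y(2) by (simp add: not_eventually not_less)
    then show ?thesis
    proof (rule frequently_elim1)
      fix n assume "ereal (av n) \<le> y"
      then have "ereal (av n) < ereal s" using y(1) by (rule le_less_trans)
      then show "av n < s" by simp
    qed
  qed
  have "\<forall>N. \<exists>m\<ge>N. 1 \<le> m \<and> av m < s"
  proof
    fix N
    obtain m where "m \<ge> max N 1" "av m < s" using fr unfolding frequently_sequentially by blast
    then show "\<exists>m\<ge>N. 1 \<le> m \<and> av m < s" by auto
  qed
  then show ?thesis using s0 l0 tpl sl unfolding av_def by blast
qed


theorem main_fp:
  assumes hyp: "S_const M C T < 2 / t_const M C"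
  shows "\<exists>x\<in>C. AE w in M. T x w = x w"
proof (cases "\<forall>x\<in>C. \<forall>y\<in>C. L1norm M (\<lambda>w. x w - y w) = 0")
  case True
  obtain x where x: "x \<in> C" using ne by auto
  then have "L1norm M (\<lambda>w. T x w - x w) = 0" using True TC by auto
  then have "AE w in M. T x w - x w = 0" using x TC by (intro L1_zero_AE int_diffC) auto
  then show ?thesis using x by (intro bexI[of _ x]) auto
next
  case False
  then obtain x1 y1 where x1: "x1 \<in> C" "y1 \<in> C" "L1norm M (\<lambda>w. x1 w - y1 w) \<noteq> 0" by blast
  have lnn: "\<forall>k. 0 \<le> lip_const M C (T^^k)" using lip_nonneg[OF x1] by blast
  obtain s l where s0: "0 < s" and l0: "0 \<le> l" and tpl: "tprop l" and sl: "s * l < 2"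
    and freq: "\<forall>N. \<exists>m\<ge>N. 1 \<le> m \<and> (\<Sum>k=1..m. lip_const M C (T^^k)) / real m < s"
    using params[OF hyp lnn] by blast
  define \<theta> where "\<theta> = s * l / 2"
  have th0: "0 \<le> \<theta>" unfolding \<theta>_def using s0 l0 by simp
  have th1: "\<theta> < 1" unfolding \<theta>_def using sl by simp
  obtain D where D: "D \<ge> 0" "\<forall>x\<in>C. \<forall>y\<in>C. L1norm M (\<lambda>w. x w - y w) \<le> D" using dist_bound by blast
  obtain Bd where Bd: "Bd \<ge> 0" "\<forall>x\<in>C. L1norm M x \<le> Bd" using Bex by auto
  obtain c0 where c0: "c0 \<in> C" using ne by auto
  define v where "v k = ces c0 (Suc k)" for k
  have vC: "v k \<in> C" for k unfolding v_def using ces_C c0 by auto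
  have vT: "L1norm M (\<lambda>w. T (v k) w - v k w) \<le> D / real (Suc k)" for k
    unfolding v_def by (rule ces_approx[OF c0 _ D(2)]) simp
  have vx: "L1norm M (\<lambda>w. v k w - (\<lambda>w. 0) w) \<le> Bd" for k using vC Bd by auto
  obtain xs0 x0 R0 where g0: "good xs0 x0 R0"
    using good_from[OF vC vT _ vx] by auto
  show ?thesis
  proof (rule ccontr)
    assume nofix: "\<not> (\<exists>x\<in>C. AE w in M. T x w = x w)"
    have Rpos: "0 < R" if g: "good xs x R" for xs x R
    proof -
      have "R \<noteq> 0"
      proof
        assume "R = 0"
        then have "x \<in> C \<and> (AE w in M. T x w = x w)"
          using g unfolding good_def by (intro limfix) auto
        then show False using nofix by blast
      qed
      then show ?thesis using good_R0[OF g] by simp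
    qed
    define P where "P p q \<longleftrightarrow> good (fst q) (fst (snd q)) (snd (snd q)) \<and>
        L1norm M (\<lambda>w. fst (snd q) w - fst (snd p) w) + snd (snd q) \<le> \<theta> * snd (snd p)"
      for p q :: "(nat \<Rightarrow> 'a \<Rightarrow> real) \<times> ('a \<Rightarrow> real) \<times> real"
    define nxt where "nxt p = (SOME q. P p q)" for p
    have nxtP: "P p (nxt p)" if "good (fst p) (fst (snd p)) (snd (snd p))" for p
    proof -
      have "\<exists>xs' x' R'. good xs' x' R' \<and> L1norm M (\<lambda>w. x' w - fst (snd p) w) + R' \<le> \<theta> * snd (snd p)"
        unfolding \<theta>_def using step[OF l0 tpl s0 sl freq lnn that Rpos[OF that]] .
      then have "\<exists>q. P p q" unfolding P_def by auto
      then show ?thesis unfolding nxt_def by (rule someI_ex)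
    qed
    define st where "st k = (nxt ^^ k) (xs0, x0, R0)" for k
    define XS where "XS k = fst (st k)" for k
    define X where "X k = fst (snd (st k))" for k
    define RR where "RR k = snd (snd (st k))" for k
    have gk: "good (XS k) (X k) (RR k)" for k
    proof (induction k)
      case 0 then show ?case using g0 unfolding XS_def X_def RR_def st_def by simp
    next
      case (Suc k)
      have "P (st k) (st (Suc k))" unfolding st_def using nxtP Suc unfolding XS_def X_def RR_def st_def by simp
      then show ?case unfolding P_def XS_def X_def RR_def by simp
    qed
    have rel: "L1norm M (\<lambda>w. X (Suc k) w - X k w) + RR (Suc k) \<le> \<theta> * RR k" for k
    proof -
      have "P (st k) (st (Suc k))" unfolding st_def using nxtP gk[of k] unfolding XS_def X_def RR_def st_def by simp
      then show ?thesis unfolding P_def XS_def X_def RR_def by simp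
    qed
    have R00: "0 \<le> R0" using good_R0[OF g0] .
    have RRb: "RR k \<le> \<theta>^k * R0" for k
    proof (induction k)
      case 0 then show ?case unfolding RR_def st_def by simp
    next
      case (Suc k)
      have "RR (Suc k) \<le> \<theta> * RR k" using rel[of k] L1_nonneg[of M "\<lambda>w. X (Suc k) w - X k w"] by simp
      also have "\<dots> \<le> \<theta> * (\<theta>^k * R0)" using Suc th0 by (intro mult_left_mono) auto
      finally show ?case by simp
    qed
    have RR0: "0 \<le> RR k" for k using good_R0[OF gk] .
    have Xint: "integrable M (X k)" for k using gk[of k] unfolding good_def by simp
    have Xstep: "L1norm M (\<lambda>w. X (Suc k) w - X k w) \<le> \<theta>^k * R0" for k
    proof -
      have "L1norm M (\<lambda>w. X (Suc k) w - X k w) \<le> \<theta> * RR k" using rel[of k] RR0[of "Suc k"] by simp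
      also have "\<dots> \<le> 1 * (\<theta>^k * R0)" using RRb[of k] RR0[of k] th0 th1 by (intro mult_mono) auto
      finally show ?thesis by simp
    qed
    define bnd where "bnd k = R0 * \<theta>^k / (1 - \<theta>)" for k
    have Xtail: "L1norm M (\<lambda>w. X (k + d) w - X k w) \<le> R0 * (\<theta>^k - \<theta>^(k+d)) / (1 - \<theta>)" for k d
    proof (induction d)
      case 0 then show ?case by (simp add: L1norm_def)
    next
      case (Suc d)
      have "L1norm M (\<lambda>w. X (k + Suc d) w - X k w) \<le> L1norm M (\<lambda>w. X (Suc (k + d)) w - X (k + d) w) + L1norm M (\<lambda>w. X (k + d) w - X k w)"
        using Xint by (simp add: L1_tri)
      also have "\<dots> \<le> \<theta>^(k+d) * R0 + R0 * (\<theta>^k - \<theta>^(k+d)) / (1 - \<theta>)"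
        using Xstep Suc by (intro add_mono) auto
      also have "\<dots> = R0 * (\<theta>^k - \<theta>^(k + Suc d)) / (1 - \<theta>)"
        using th1 by (simp add: field_simps)
      finally show ?case .
    qed
    have Xt: "L1norm M (\<lambda>w. X j w - X k w) \<le> bnd k" if kj: "k \<le> j" for k j
    proof -
      obtain d where j: "j = k + d" using le_Suc_ex[OF kj] by (elim exE)
      have "L1norm M (\<lambda>w. X j w - X k w) \<le> R0 * (\<theta>^k - \<theta>^(k+d)) / (1 - \<theta>)" unfolding j by (rule Xtail)
      also have "\<dots> \<le> R0 * \<theta>^k / (1 - \<theta>)"
        using th0 th1 R00 by (intro divide_right_mono mult_left_mono) auto
      finally show ?thesis unfolding bnd_def .
    qed
    have bnd0: "bnd k \<le> bnd 0" for k
    proof -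
      have "\<theta>^k \<le> 1" using th0 th1 by (intro power_le_one) auto
      then show ?thesis unfolding bnd_def using th1 R00 by (intro divide_right_mono mult_left_mono) auto
    qed
    have XB: "L1norm M (X k) \<le> L1norm M (X 0) + bnd 0" for k
    proof -
      have "L1norm M (X k) = L1norm M (\<lambda>w. (X k w - X 0 w) + X 0 w)" by simp
      also have "\<dots> \<le> L1norm M (\<lambda>w. X k w - X 0 w) + L1norm M (X 0)" using Xint by (intro L1_add) auto
      also have "\<dots> \<le> bnd 0 + L1norm M (X 0)" using Xt[of 0 k] by simp
      finally show ?thesis by simp
    qed
    obtain lam N z where lN: "\<forall>k. cc k (lam k) (N k)" and zm: "z \<in> borel_measurable M"
      and zl: "AE w in M. (\<lambda>k. comb X (lam k) (N k) w) \<longlonglongrightarrow> z w"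
      using convex_ae[OF sf, of X "L1norm M (X 0) + bnd 0"] Xint XB by blast
    have lnn2: "\<forall>m. 0 \<le> lam k m" and l1: "(\<Sum>m<N k. lam k m) = 1" for k using lN unfolding cc_def by auto
    have zX: "L1norm M (\<lambda>w. comb X (lam k) (N k) w - X j w) \<le> bnd j" if "j \<le> k" for j k
    proof -
      have "L1norm M (\<lambda>w. comb X (lam k) (N k) w - X j w) \<le> (\<Sum>m<N k. lam k m * L1norm M (\<lambda>w. X m w - X j w))"
        using Xint lnn2 l1 by (intro comb_dist) auto
      also have "\<dots> \<le> (\<Sum>m<N k. lam k m * bnd j)"
      proof (intro sum_mono)
        fix m
        show "lam k m * L1norm M (\<lambda>w. X m w - X j w) \<le> lam k m * bnd j"
        proof (cases "m < k")
          case True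
          then have "lam k m = 0" using lN unfolding cc_def by auto
          then show ?thesis by simp
        next
          case False
          then show ?thesis using Xt[of j m] that lnn2 by (intro mult_left_mono) auto
        qed
      qed
      also have "\<dots> = bnd j" by (subst sum_distrib_right[symmetric]) (simp add: l1)
      finally show ?thesis .
    qed
    have combint: "integrable M (comb X (lam k) (N k))" for k
      unfolding comb_def using Xint by (auto intro!: integrable_sum integrable_mult_right)
    have zj: "integrable M (\<lambda>w. z w - X j w) \<and> L1norm M (\<lambda>w. z w - X j w) \<le> bnd j" for j
    proof (rule fatou_L1[where f="\<lambda>i w. comb X (lam (i + j)) (N (i + j)) w - X j w"])
      show "integrable M (\<lambda>w. comb X (lam (i + j)) (N (i + j)) w - X j w)" for i
        using combint Xint by (intro Bochner_Integration.integrable_diff) auto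
      show "(\<lambda>w. z w - X j w) \<in> borel_measurable M" using zm Xint by auto
      show "AE w in M. (\<lambda>i. comb X (lam (i + j)) (N (i + j)) w - X j w) \<longlonglongrightarrow> z w - X j w"
        using zl
      proof eventually_elim
        case (elim w)
        then have "(\<lambda>i. comb X (lam (i + j)) (N (i + j)) w) \<longlonglongrightarrow> z w"
          using LIMSEQ_ignore_initial_segment by blast
        then show ?case by (intro tendsto_diff tendsto_const)
      qed
      show "L1norm M (\<lambda>w. comb X (lam (i + j)) (N (i + j)) w - X j w) \<le> bnd j" for i
        by (rule zX) simp
    qed
    have zint: "integrable M z"
    proof -
      have "integrable M (\<lambda>w. (z w - X 0 w) + X 0 w)" using zj[of 0] Xint by (intro Bochner_Integration.integrable_add) auto
      then show ?thesis by simp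
    qed
    have "\<forall>j. \<exists>n. L1norm M (\<lambda>w. XS j n w - X j w) < RR j + 1 / real (Suc j) \<and>
                 L1norm M (\<lambda>w. T (XS j n) w - XS j n w) < 1 / real (Suc j)"
    proof
      fix j
      have a1: "(\<lambda>n. L1norm M (\<lambda>w. XS j n w - X j w)) \<longlonglongrightarrow> RR j"
        and a2: "(\<lambda>n. L1norm M (\<lambda>w. T (XS j n) w - XS j n w)) \<longlonglongrightarrow> 0"
        using gk[of j] unfolding good_def by auto
      have p: "0 < 1 / real (Suc j)" by simp
      have "eventually (\<lambda>n. L1norm M (\<lambda>w. XS j n w - X j w) < RR j + 1 / real (Suc j)) sequentially"
        using order_tendstoD(2)[OF a1, of "RR j + 1 / real (Suc j)"] p by simp
      moreover have "eventually (\<lambda>n. L1norm M (\<lambda>w. T (XS j n) w - XS j n w) < 1 / real (Suc j)) sequentially"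
        using order_tendstoD(2)[OF a2 p] .
      ultimately have "eventually (\<lambda>n. L1norm M (\<lambda>w. XS j n w - X j w) < RR j + 1 / real (Suc j) \<and>
                 L1norm M (\<lambda>w. T (XS j n) w - XS j n w) < 1 / real (Suc j)) sequentially"
        by (rule eventually_conj)
      then show "\<exists>n. L1norm M (\<lambda>w. XS j n w - X j w) < RR j + 1 / real (Suc j) \<and>
                 L1norm M (\<lambda>w. T (XS j n) w - XS j n w) < 1 / real (Suc j)"
        unfolding eventually_sequentially by blast
    qed
    from choice[OF this] obtain nj where nj: "\<forall>j. L1norm M (\<lambda>w. XS j (nj j) w - X j w) < RR j + 1 / real (Suc j) \<and>
                 L1norm M (\<lambda>w. T (XS j (nj j)) w - XS j (nj j) w) < 1 / real (Suc j)"
      by (elim exE) (rule that)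
    define y where "y j = XS j (nj j)" for j
    have yC: "y j \<in> C" for j unfolding y_def using gk[of j] unfolding good_def by auto
    have lim1: "(\<lambda>j. 1 / real (Suc j)) \<longlonglongrightarrow> 0"
      using LIMSEQ_inverse_real_of_nat by (simp add: inverse_eq_divide)
    have limth: "(\<lambda>j. \<theta>^j) \<longlonglongrightarrow> 0" using th0 th1 by (intro LIMSEQ_power_zero) auto
    have yz: "L1norm M (\<lambda>w. y j w - z w) \<le> \<theta>^j * R0 + 1 / real (Suc j) + bnd j" for j
    proof -
      have "L1norm M (\<lambda>w. y j w - z w) \<le> L1norm M (\<lambda>w. y j w - X j w) + L1norm M (\<lambda>w. X j w - z w)"
        using yC C_int Xint zint by (intro L1_tri) auto
      also have "L1norm M (\<lambda>w. X j w - z w) = L1norm M (\<lambda>w. z w - X j w)" by (rule L1_minus)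
      also have "L1norm M (\<lambda>w. y j w - X j w) \<le> RR j + 1 / real (Suc j)"
        using nj unfolding y_def by (simp add: less_imp_le)
      finally show ?thesis using zj[of j] RRb[of j] by simp
    qed
    have "(\<lambda>j. \<theta>^j * R0 + 1 / real (Suc j) + bnd j) \<longlonglongrightarrow> 0 * R0 + 0 + R0 * 0 / (1 - \<theta>)"
      unfolding bnd_def by (intro tendsto_add tendsto_mult tendsto_divide tendsto_const limth lim1) (use th1 in auto)
    then have lb: "(\<lambda>j. \<theta>^j * R0 + 1 / real (Suc j) + bnd j) \<longlonglongrightarrow> 0" by simp
    have yz0: "(\<lambda>j. L1norm M (\<lambda>w. y j w - z w)) \<longlonglongrightarrow> 0"
    proof (rule tendsto_sandwich[OF _ _ tendsto_const lb])
      show "eventually (\<lambda>n. 0 \<le> L1norm M (\<lambda>w. y n w - z w)) sequentially"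
        by (intro always_eventually allI) (rule L1_nonneg)
      show "eventually (\<lambda>n. L1norm M (\<lambda>w. y n w - z w) \<le> \<theta>^n * R0 + 1 / real (Suc n) + bnd n) sequentially"
        by (intro always_eventually allI) (rule yz)
    qed
    have ya0: "(\<lambda>j. L1norm M (\<lambda>w. T (y j) w - y j w)) \<longlonglongrightarrow> 0"
    proof (rule tendsto_sandwich[OF _ _ tendsto_const lim1])
      show "eventually (\<lambda>n. 0 \<le> L1norm M (\<lambda>w. T (y n) w - y n w)) sequentially"
        by (intro always_eventually allI) (rule L1_nonneg)
      show "eventually (\<lambda>n. L1norm M (\<lambda>w. T (y n) w - y n w) \<le> 1 / real (Suc n)) sequentially"
        using nj unfolding y_def by (intro always_eventually allI) (simp add: less_imp_le)
    qed
    have "z \<in> C \<and> (AE w in M. T z w = z w)" by (rule limfix[OF yC zint yz0 ya0])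
    then show False using nofix by blast
  qed
qed

end

theorem mainTheorem3:
  fixes M :: "'a measure" and C :: "('a \<Rightarrow> real) set"
    and T :: "('a \<Rightarrow> real) \<Rightarrow> ('a \<Rightarrow> real)"
  assumes "sigma_finite_measure M"
    and "L1_subset M C" and "C \<noteq> {}"
    and "L1_closed M C" and "L1_convex C" and "L1_bounded M C"
    and "\<forall>x\<in>C. T x \<in> C"
    and "L1_affine M C T" and "L1_lipschitzian M C T"
    and "S_const M C T < 2 / t_const M C"
  shows "\<exists>x\<in>C. AE w in M. T x w = x w"
proof -
  interpret fp M C T unfolding fp_def using assms(1-9) by blast
  show ?thesis using main_fp[OF assms(10)] .
qed

end
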